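(* Let $(M,g,k,t)$ be admissible with $t=\ell\nabla\tau$, let $f$ be smooth on the range of $\tau$, and let $g_K=d(f(\tau)k^\flat)(\cdot,J\cdot)$, $J=J_{g,k,t}$, be the induced Kähler metric on the open region where $f\iota<0$ and $f'G/\ell-f\,dk^\flat(k,t)<0$. Then on that region $$g_K(\mathcal V,\mathcal H)=0,\qquad g_K(k,t)=0,\qquad g_K(k,k)=g_K(t,t),\qquad g_K|_{\mathcal H}=-f(\tau)\,\iota\; g|_{\mathcal H}.$$
   Context: Standing setup: $(M,g)$ is an oriented semi-Riemannian $4$-manifold with Levi-Civita connection $\nabla$, and $k_+,k_-$ are vector fields which are pointwise linearly independent, such that with $\mathcal V:=\mathrm{span}(k_+,k_-)$ the $g$-orthogonal complement $\mathcal H:=\mathcal V^\perp$ is spacelike ($g|_{\mathcal H}$ positive definite). Orient $\mathcal V$ by the ordered pair $(k_+,k_-)$ and give $\mathcal H$ the induced orientation ($(e_1,e_2)$ positive iff $(k_+,k_-,e_1,e_2)$ positive). $J=J_{g,k_+,k_-}$ is defined by $Jk_+=k_-$, $Jk_-=-k_+$, and $Je_1=e_2$, $Je_2=-e_1$ for any positively oriented $g$-orthonormal frame $(e_1,e_2)$ of $\mathcal H$. For $X$ with values in $\mathcal V$, $\nabla^oX$ is the trace-free symmetric part of $\mathcal H\to\mathcal H$, $v\mapsto \pi(\nabla_vX)$ ($\pi$ the orthogonal projection onto $\mathcal H$); the twist function of $X$ is $\iota^X:=g(X,[e_1,e_2])$ for a positively oriented $g$-orthonormal local frame $(e_1,e_2)$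 of $\mathcal H$. Admissible manifold: an oriented semi-Riemannian $4$-manifold $(M,g)$ with vector fields $k,t$ such that, with $k_+=k$, $k_-=t$ in the setup above, (1) $[k,\Gamma(\mathcal H)]\subset\Gamma(\mathcal H)$, $[t,\Gamma(\mathcal H)]\subset\Gamma(\mathcal H)$ and $J\circ\nabla^ok=\nabla^ot$ on $\mathcal H$ (so $J$ is integrable); (2) $t=\ell\nabla\tau$ for smooth functions $\ell,\tau$; (3) the gradients $\nabla(g(k,t))$ and $\nabla(g(k,k))$ take values in $\mathcal V$. Notation: $k^\flat=g(k,\cdot)$, $\iota:=\iota^k$, $G:=g(k,k)g(t,t)-g(k,t)^2$, $f'$ the derivative of $f$. *)

theory Defs
  imports "HOL-Analysis.Analysis"
begin

text \<open>Local (coordinate chart) model: the manifold is an open set U of real^4 carrying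
  the standard orientation; vectors and points are elements of real^4; a metric is a
  matrix field gm.\<close>

type_synonym vec4 = "real^4"

fun Cn_on :: "nat \<Rightarrow> 'a::euclidean_space set \<Rightarrow> ('a \<Rightarrow> 'b::real_normed_vector) \<Rightarrow> bool" where
  "Cn_on 0 S f = continuous_on S f"
| "Cn_on (Suc n) S f = (f differentiable_on S \<and>
      (\<forall>v. Cn_on n S (\<lambda>x. frechet_derivative f (at x) v)))"

definition smooth_on :: "'a::euclidean_space set \<Rightarrow> ('a \<Rightarrow> 'b::real_normed_vector) \<Rightarrow> bool" where
  "smooth_on S f = (\<forall>n. Cn_on n S f)"

definition Dir :: "('a::real_normed_vector \<Rightarrow> 'b::real_normed_vector) \<Rightarrow> 'a \<Rightarrow> 'a \<Rightarrow> 'b" where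
  "Dir F x v = frechet_derivative F (at x) v"

definition gx :: "(vec4 \<Rightarrow> real^4^4) \<Rightarrow> vec4 \<Rightarrow> vec4 \<Rightarrow> vec4 \<Rightarrow> real" where
  "gx gm x u v = u \<bullet> (gm x *v v)"

definition Dg :: "(vec4 \<Rightarrow> real^4^4) \<Rightarrow> vec4 \<Rightarrow> vec4 \<Rightarrow> vec4 \<Rightarrow> vec4 \<Rightarrow> real" where
  "Dg gm x a b c = b \<bullet> (Dir gm x a *v c)"

definition Christoffel :: "(vec4 \<Rightarrow> real^4^4) \<Rightarrow> vec4 \<Rightarrow> vec4 \<Rightarrow> vec4 \<Rightarrow> vec4" where
  "Christoffel gm x v w = matrix_inv (gm x) *v
     (\<chi> l. (Dg gm x v (axis l 1) w + Dg gm x w (axis l 1) v - Dg gm x (axis l 1) v w) / 2)"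

definition LC :: "(vec4 \<Rightarrow> real^4^4) \<Rightarrow> (vec4 \<Rightarrow> vec4) \<Rightarrow> vec4 \<Rightarrow> vec4 \<Rightarrow> vec4" where
  "LC gm X x v = Dir X x v + Christoffel gm x v (X x)"

definition lie :: "(vec4 \<Rightarrow> vec4) \<Rightarrow> (vec4 \<Rightarrow> vec4) \<Rightarrow> vec4 \<Rightarrow> vec4" where
  "lie X Y x = Dir Y x (X x) - Dir X x (Y x)"

definition grad :: "(vec4 \<Rightarrow> real^4^4) \<Rightarrow> (vec4 \<Rightarrow> real) \<Rightarrow> vec4 \<Rightarrow> vec4" where
  "grad gm h x = matrix_inv (gm x) *v (\<chi> i. Dir h x (axis i 1))"

definition Vd :: "(vec4 \<Rightarrow> vec4) \<Rightarrow> (vec4 \<Rightarrow> vec4) \<Rightarrow> vec4 \<Rightarrow> vec4 set" where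
  "Vd kp km x = span {kp x, km x}"

definition Hd :: "(vec4 \<Rightarrow> real^4^4) \<Rightarrow> (vec4 \<Rightarrow> vec4) \<Rightarrow> (vec4 \<Rightarrow> vec4) \<Rightarrow> vec4 \<Rightarrow> vec4 set" where
  "Hd gm kp km x = {v. \<forall>w\<in>Vd kp km x. gx gm x v w = 0}"

definition projH :: "(vec4 \<Rightarrow> real^4^4) \<Rightarrow> (vec4 \<Rightarrow> vec4) \<Rightarrow> (vec4 \<Rightarrow> vec4) \<Rightarrow> vec4 \<Rightarrow> vec4 \<Rightarrow> vec4" where
  "projH gm kp km x w = (THE p. p \<in> Hd gm kp km x \<and> w - p \<in> Vd kp km x)"

definition posframe :: "(vec4 \<Rightarrow> real^4^4) \<Rightarrow> (vec4 \<Rightarrow> vec4) \<Rightarrow> (vec4 \<Rightarrow> vec4) \<Rightarrow> vec4 \<Rightarrow> vec4 \<Rightarrow> vec4 \<Rightarrow> bool" where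
  "posframe gm kp km x e1 e2 =
     (e1 \<in> Hd gm kp km x \<and> e2 \<in> Hd gm kp km x \<and>
      gx gm x e1 e1 = 1 \<and> gx gm x e2 e2 = 1 \<and> gx gm x e1 e2 = 0 \<and>
      det (vector [kp x, km x, e1, e2] :: real^4^4) > 0)"

definition Jop :: "(vec4 \<Rightarrow> real^4^4) \<Rightarrow> (vec4 \<Rightarrow> vec4) \<Rightarrow> (vec4 \<Rightarrow> vec4) \<Rightarrow> vec4 \<Rightarrow> vec4 \<Rightarrow> vec4" where
  "Jop gm kp km x = (THE L. linear L \<and> L (kp x) = km x \<and> L (km x) = - kp x \<and>
      (\<forall>e1 e2. posframe gm kp km x e1 e2 \<longrightarrow> L e1 = e2 \<and> L e2 = - e1))"

definition trH :: "(vec4 \<Rightarrow> real^4^4) \<Rightarrow> (vec4 \<Rightarrow> vec4) \<Rightarrow> (vec4 \<Rightarrow> vec4) \<Rightarrow> vec4 \<Rightarrow> (vec4 \<Rightarrow> vec4) \<Rightarrow> real" where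
  "trH gm kp km x A = (THE c. \<forall>e1 e2. posframe gm kp km x e1 e2 \<longrightarrow>
      c = gx gm x (A e1) e1 + gx gm x (A e2) e2)"

text \<open>nabla^o X at x: trace-free symmetric part of v \<mapsto> pi(nabla_v X) on H_x.\<close>
definition nablao :: "(vec4 \<Rightarrow> real^4^4) \<Rightarrow> (vec4 \<Rightarrow> vec4) \<Rightarrow> (vec4 \<Rightarrow> vec4) \<Rightarrow> (vec4 \<Rightarrow> vec4) \<Rightarrow> vec4 \<Rightarrow> vec4 \<Rightarrow> vec4" where
  "nablao gm kp km X x v =
     (let A = (\<lambda>u. projH gm kp km x (LC gm X x u)) in
      THE w. w \<in> Hd gm kp km x \<and>
        (\<forall>u\<in>Hd gm kp km x. gx gm x w u =
            (gx gm x (A v) u + gx gm x v (A u)) / 2 - trH gm kp km x A / 2 * gx gm x v u))"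

text \<open>Twist function of X: g(X,[e1,e2]) for a positively oriented orthonormal local
  frame (e1,e2) of H (independent of the frame).\<close>
definition twist :: "vec4 set \<Rightarrow> (vec4 \<Rightarrow> real^4^4) \<Rightarrow> (vec4 \<Rightarrow> vec4) \<Rightarrow> (vec4 \<Rightarrow> vec4) \<Rightarrow> (vec4 \<Rightarrow> vec4) \<Rightarrow> vec4 \<Rightarrow> real" where
  "twist U gm kp km X x = (THE c. \<forall>W e1 e2. open W \<and> x \<in> W \<and> W \<subseteq> U \<and>
      smooth_on W e1 \<and> smooth_on W e2 \<and> (\<forall>y\<in>W. posframe gm kp km y (e1 y) (e2 y)) \<longrightarrow>
      gx gm x (X x) (lie e1 e2 x) = c)"

text \<open>Musical flat (components of the 1-form g(X,.)) and exterior derivative of a 1-form.\<close>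
definition flat :: "(vec4 \<Rightarrow> real^4^4) \<Rightarrow> (vec4 \<Rightarrow> vec4) \<Rightarrow> vec4 \<Rightarrow> vec4" where
  "flat gm X x = transpose (gm x) *v X x"

definition dform :: "(vec4 \<Rightarrow> vec4) \<Rightarrow> vec4 \<Rightarrow> vec4 \<Rightarrow> vec4 \<Rightarrow> real" where
  "dform \<alpha> x u v = Dir \<alpha> x u \<bullet> v - Dir \<alpha> x v \<bullet> u"

definition admissible :: "vec4 set \<Rightarrow> (vec4 \<Rightarrow> real^4^4) \<Rightarrow> (vec4 \<Rightarrow> vec4) \<Rightarrow> (vec4 \<Rightarrow> vec4)
    \<Rightarrow> (vec4 \<Rightarrow> real) \<Rightarrow> (vec4 \<Rightarrow> real) \<Rightarrow> bool" where
  "admissible U gm k t l \<tau> =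
    (open U \<and> smooth_on U gm \<and>
     (\<forall>x\<in>U. transpose (gm x) = gm x \<and> invertible (gm x)) \<and>
     smooth_on U k \<and> smooth_on U t \<and>
     (\<forall>x\<in>U. \<forall>a b. a *\<^sub>R k x + b *\<^sub>R t x = 0 \<longrightarrow> a = 0 \<and> b = 0) \<and>
     (\<forall>x\<in>U. \<forall>v\<in>Hd gm k t x. v \<noteq> 0 \<longrightarrow> gx gm x v v > 0) \<and>

     (\<forall>X. smooth_on U X \<and> (\<forall>y\<in>U. X y \<in> Hd gm k t y) \<longrightarrow>
          (\<forall>y\<in>U. lie k X y \<in> Hd gm k t y \<and> lie t X y \<in> Hd gm k t y)) \<and>
     (\<forall>x\<in>U. \<forall>v\<in>Hd gm k t x. Jop gm k t x (nablao gm k t k x v) = nablao gm k t t x v) \<and>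

     smooth_on U l \<and> smooth_on U \<tau> \<and> (\<forall>x\<in>U. t x = l x *\<^sub>R grad gm \<tau> x) \<and>

     (\<forall>x\<in>U. grad gm (\<lambda>y. gx gm y (k y) (t y)) x \<in> Vd k t x \<and>
             grad gm (\<lambda>y. gx gm y (k y) (k y)) x \<in> Vd k t x))"

definition Gfun :: "(vec4 \<Rightarrow> real^4^4) \<Rightarrow> (vec4 \<Rightarrow> vec4) \<Rightarrow> (vec4 \<Rightarrow> vec4) \<Rightarrow> vec4 \<Rightarrow> real" where
  "Gfun gm k t x = gx gm x (k x) (k x) * gx gm x (t x) (t x) - (gx gm x (k x) (t x))^2"

definition gKahler :: "(vec4 \<Rightarrow> real^4^4) \<Rightarrow> (vec4 \<Rightarrow> vec4) \<Rightarrow> (vec4 \<Rightarrow> vec4) \<Rightarrow> (real \<Rightarrow> real)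
    \<Rightarrow> (vec4 \<Rightarrow> real) \<Rightarrow> vec4 \<Rightarrow> vec4 \<Rightarrow> vec4 \<Rightarrow> real" where
  "gKahler gm k t f \<tau> x u v = dform (\<lambda>y. f (\<tau> y) *\<^sub>R flat gm k y) x u (Jop gm k t x v)"

definition Kregion :: "vec4 set \<Rightarrow> (vec4 \<Rightarrow> real^4^4) \<Rightarrow> (vec4 \<Rightarrow> vec4) \<Rightarrow> (vec4 \<Rightarrow> vec4) \<Rightarrow> (vec4 \<Rightarrow> real)
    \<Rightarrow> (vec4 \<Rightarrow> real) \<Rightarrow> (real \<Rightarrow> real) \<Rightarrow> vec4 set" where
  "Kregion U gm k t l \<tau> f = {x\<in>U. f (\<tau> x) * twist U gm k t k x < 0 \<and>
     deriv f (\<tau> x) * Gfun gm k t x / l x - f (\<tau> x) * dform (flat gm k) x (k x) (t x) < 0}"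

end

theory Submission
  imports Defs
begin


lemma Cn_mono: "Cn_on (Suc n) S f \<Longrightarrow> Cn_on n S f"
proof (induction n arbitrary: f)
  case 0 then show ?case by (simp add: differentiable_imp_continuous_on)
next
  case (Suc n) then show ?case by auto
qed

lemma Cn_subset: "Cn_on n S f \<Longrightarrow> T \<subseteq> S \<Longrightarrow> Cn_on n T f"
proof (induction n arbitrary: f)
  case 0 then show ?case by (auto intro: continuous_on_subset)
next
  case (Suc n) then show ?case by (auto intro: differentiable_on_subset)
qed

lemma fd_transform:
  assumes "open S" "x \<in> S" "\<forall>y\<in>S. f y = g y" "f differentiable (at x)"
  shows "frechet_derivative f (at x) = frechet_derivative g (at x)"
proof -
  have d: "(f has_derivative frechet_derivative f (at x)) (at x)"
    using assms(4) frechet_derivative_works by blast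
  have "(g has_derivative frechet_derivative f (at x)) (at x)"
    by (rule has_derivative_transform_within_open[OF d assms(1,2)]) (use assms(3) in auto)
  then show ?thesis by (metis frechet_derivative_at)
qed

lemma Cn_diff_at: "Cn_on (Suc n) S f \<Longrightarrow> open S \<Longrightarrow> x \<in> S \<Longrightarrow>
   (f has_derivative frechet_derivative f (at x)) (at x)"
  by (metis Cn_on.simps(2) differentiable_on_eq_differentiable_at frechet_derivative_works)

lemma Cn_cong: "open S \<Longrightarrow> (\<forall>x\<in>S. f x = g x) \<Longrightarrow> Cn_on n S f \<Longrightarrow> Cn_on n S g"
proof (induction n arbitrary: f g)
  case 0 then show ?case using continuous_on_cong by force
next
  case (Suc n)
  have hd: "\<And>x. x \<in> S \<Longrightarrow> (g has_derivative frechet_derivative f (at x)) (at x)"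
    by (rule has_derivative_transform_within_open[OF Cn_diff_at[OF Suc.prems(3) Suc.prems(1)]])
       (use Suc.prems in auto)
  then have "\<And>x. x \<in> S \<Longrightarrow> frechet_derivative g (at x) = frechet_derivative f (at x)"
    by (metis frechet_derivative_at)
  moreover have "g differentiable_on S"
    using hd Suc.prems(1) differentiable_on_eq_differentiable_at differentiableI by blast
  moreover have "\<forall>v. Cn_on n S (\<lambda>x. frechet_derivative f (at x) v)" using Suc.prems(3) by simp
  ultimately show ?case
    using Suc.IH[OF Suc.prems(1), of "\<lambda>x. frechet_derivative f (at x) _" "\<lambda>x. frechet_derivative g (at x) _"]
    by auto
qed

lemma Cn_SucI:
  assumes "open S" "\<And>x. x \<in> S \<Longrightarrow> (f has_derivative D x) (at x)"
    "\<And>v. Cn_on n S (\<lambda>x. D x v)"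
  shows "Cn_on (Suc n) S f"
proof -
  have "f differentiable_on S" using assms(1,2)
    by (meson differentiableI differentiable_on_eq_differentiable_at)
  moreover have "\<And>x. x \<in> S \<Longrightarrow> frechet_derivative f (at x) = D x"
    using assms(2) frechet_derivative_at by metis
  moreover have "\<And>v. Cn_on n S (\<lambda>x. frechet_derivative f (at x) v)"
    using assms(3) Cn_cong[OF assms(1)] by (smt (verit, best) calculation(2))
  ultimately show ?thesis by simp
qed


lemma Cn_const: "open S \<Longrightarrow> Cn_on n S (\<lambda>x. c)"
proof (induction n arbitrary: c)
  case 0 then show ?case by simp
next
  case (Suc n)
  show ?case by (rule Cn_SucI[OF Suc.prems, where D="\<lambda>x v. 0"]) (auto intro: Suc.IH[OF Suc.prems])
qed

lemma Cn_linear: "open S \<Longrightarrow> bounded_linear L \<Longrightarrow> Cn_on n S f \<Longrightarrow> Cn_on n S (\<lambda>x. L (f x))"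
proof (induction n arbitrary: f)
  case 0 then show ?case
    using bounded_linear.continuous_on[OF 0(2)] by (metis Cn_on.simps(1))
next
  case (Suc n)
  show ?case
  proof (rule Cn_SucI[OF Suc.prems(1), where D="\<lambda>x v. L (frechet_derivative f (at x) v)"])
    show "((\<lambda>x. L (f x)) has_derivative (\<lambda>v. L (frechet_derivative f (at x) v))) (at x)" if "x \<in> S" for x
      using bounded_linear.has_derivative[OF Suc.prems(2) Cn_diff_at[OF Suc.prems(3,1) that]] .
    show "Cn_on n S (\<lambda>x. L (frechet_derivative f (at x) v))" for v
      using Suc.IH[OF Suc.prems(1,2)] Suc.prems(3) by simp
  qed
qed

lemma Cn_add: "open S \<Longrightarrow> Cn_on n S f \<Longrightarrow> Cn_on n S g \<Longrightarrow> Cn_on n S (\<lambda>x. f x + g x)"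
proof (induction n arbitrary: f g)
  case 0 then show ?case by (simp add: continuous_on_add)
next
  case (Suc n)
  show ?case
  proof (rule Cn_SucI[OF Suc.prems(1), where D="\<lambda>x v. frechet_derivative f (at x) v + frechet_derivative g (at x) v"])
    show "((\<lambda>x. f x + g x) has_derivative (\<lambda>v. frechet_derivative f (at x) v + frechet_derivative g (at x) v)) (at x)" if "x \<in> S" for x
      using has_derivative_add[OF Cn_diff_at[OF Suc.prems(2,1) that] Cn_diff_at[OF Suc.prems(3,1) that]] .
    show "Cn_on n S (\<lambda>x. frechet_derivative f (at x) v + frechet_derivative g (at x) v)" for v
      using Suc.IH[OF Suc.prems(1)] Suc.prems(2,3) by simp
  qed
qed

lemma Cn_bilinear: "open S \<Longrightarrow> bounded_bilinear P \<Longrightarrow> Cn_on n S f \<Longrightarrow> Cn_on n S g \<Longrightarrow> Cn_on n S (\<lambda>x. P (f x) (g x))"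
proof (induction n arbitrary: f g)
  case 0 then show ?case by (simp add: bounded_bilinear.continuous_on)
next
  case (Suc n)
  show ?case
  proof (rule Cn_SucI[OF Suc.prems(1), where D="\<lambda>x v. P (f x) (frechet_derivative g (at x) v) + P (frechet_derivative f (at x) v) (g x)"])
    show "((\<lambda>x. P (f x) (g x)) has_derivative (\<lambda>v. P (f x) (frechet_derivative g (at x) v) + P (frechet_derivative f (at x) v) (g x))) (at x)" if "x \<in> S" for x
      using bounded_bilinear.FDERIV[OF Suc.prems(2) Cn_diff_at[OF Suc.prems(3,1) that] Cn_diff_at[OF Suc.prems(4,1) that]] .
    show "Cn_on n S (\<lambda>x. P (f x) (frechet_derivative g (at x) v) + P (frechet_derivative f (at x) v) (g x))" for v
      apply (rule Cn_add[OF Suc.prems(1)])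
      using Suc.IH[OF Suc.prems(1,2) Cn_mono[OF Suc.prems(3)], of "\<lambda>x. frechet_derivative g (at x) v"] Suc.prems(4) apply simp
      using Suc.IH[OF Suc.prems(1,2) _ Cn_mono[OF Suc.prems(4)], of "\<lambda>x. frechet_derivative f (at x) v"] Suc.prems(3) by simp
  qed
qed

lemma Cn_sum: assumes "open S" "finite I" "\<And>i. i \<in> I \<Longrightarrow> Cn_on n S (f i)"
  shows "Cn_on n S (\<lambda>x. \<Sum>i\<in>I. f i x)"
  using assms(2,3)
proof (induction I rule: finite_induct)
  case empty then show ?case by (simp add: Cn_const assms(1))
next
  case (insert a I) then show ?case by (simp add: Cn_add assms(1))
qed

lemma Cn_comp_real:
  fixes h :: "'a::euclidean_space \<Rightarrow> real" and \<phi> :: "real \<Rightarrow> real"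
  shows "open S \<Longrightarrow> open T \<Longrightarrow> smooth_on T \<phi> \<Longrightarrow> Cn_on n S h \<Longrightarrow> h ` S \<subseteq> T \<Longrightarrow> Cn_on n S (\<lambda>x. \<phi> (h x))"
proof (induction n arbitrary: \<phi>)
  case 0 then show ?case
    by (simp add: smooth_on_def) (metis Cn_on.simps(1) continuous_on_compose2)
next
  case (Suc n)
  define \<phi>1 where "\<phi>1 = (\<lambda>y. frechet_derivative \<phi> (at y) 1)"
  have s1: "smooth_on T \<phi>1" unfolding smooth_on_def \<phi>1_def
    using Suc.prems(3) unfolding smooth_on_def by (metis Cn_on.simps(2))
  show ?case
  proof (rule Cn_SucI[OF Suc.prems(1), where D="\<lambda>x v. frechet_derivative h (at x) v * \<phi>1 (h x)"])
    fix x assume x: "x \<in> S"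
    have hx: "h x \<in> T" using x Suc.prems(5) by auto
    have dphi: "(\<phi> has_derivative frechet_derivative \<phi> (at (h x))) (at (h x))"
      using Cn_diff_at[OF _ Suc.prems(2) hx] Suc.prems(3) unfolding smooth_on_def by blast
    have lin: "frechet_derivative \<phi> (at (h x)) w = w * \<phi>1 (h x)" for w
      unfolding \<phi>1_def using linear_scale_real[OF has_derivative_linear[OF dphi], of w 1] by simp
    show "((\<lambda>x. \<phi> (h x)) has_derivative (\<lambda>v. frechet_derivative h (at x) v * \<phi>1 (h x))) (at x)"
      using diff_chain_at[OF Cn_diff_at[OF Suc.prems(4,1) x] dphi] lin by (simp add: o_def)
  next
    fix v
    show "Cn_on n S (\<lambda>x. frechet_derivative h (at x) v * \<phi>1 (h x))"
      apply (rule Cn_bilinear[OF Suc.prems(1) bounded_bilinear_mult])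
      using Suc.prems(4) apply simp
      using Suc.IH[OF Suc.prems(1,2) s1 Cn_mono[OF Suc.prems(4)] Suc.prems(5)] .
  qed
qed

lemma open_nz: "open (UNIV - {0::real})" by auto

lemma Cn_inverse: "Cn_on n (UNIV - {0::real}) inverse"
proof (induction n)
  case 0 then show ?case by (simp add: continuous_on_inverse continuous_on_id)
next
  case (Suc n)
  show ?case
  proof (rule Cn_SucI[OF open_nz, where D="\<lambda>x v. (- (inverse x * inverse x)) * v"])
    fix x :: real assume "x \<in> UNIV - {0}"
    then have "(inverse has_field_derivative - (inverse x ^ Suc (Suc 0))) (at x)"
      using DERIV_inverse[of x UNIV] by auto
    moreover have "- (inverse x ^ Suc (Suc 0)) = - (inverse x * inverse x)" by simp
    ultimately show "(inverse has_derivative (\<lambda>v. (- (inverse x * inverse x)) * v)) (at x)"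
      unfolding has_field_derivative_def by metis
  next
    fix v :: real
    show "Cn_on n (UNIV - {0}) (\<lambda>x. (- (inverse x * inverse x)) * v)"
      apply (rule Cn_bilinear[OF open_nz bounded_bilinear_mult _ Cn_const[OF open_nz]])
      apply (rule Cn_linear[OF open_nz bounded_linear_minus[OF bounded_linear_ident]])
      apply (rule Cn_bilinear[OF open_nz bounded_bilinear_mult Suc.IH Suc.IH])
      done
  qed
qed

lemma smooth_inverse: "smooth_on (UNIV - {0::real}) inverse"
  using Cn_inverse smooth_on_def by blast

lemma open_pos: "open {0::real<..}" by simp

lemma Cn_sqrt: "Cn_on n {0::real<..} sqrt"
proof (induction n)
  case 0 then show ?case by (simp add: continuous_on_real_sqrt continuous_on_id)
next
  case (Suc n)
  show ?case
  proof (rule Cn_SucI[OF open_pos, where D="\<lambda>x v. (inverse (sqrt x) / 2) * v"])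
    fix x :: real assume "x \<in> {0<..}"
    then have "(sqrt has_field_derivative inverse (sqrt x) / 2) (at x)"
      by (intro DERIV_real_sqrt) auto
    then show "(sqrt has_derivative (\<lambda>v. (inverse (sqrt x) / 2) * v)) (at x)"
      unfolding has_field_derivative_def by assumption
  next
    fix v :: real
    have "Cn_on n {0<..} (\<lambda>x. inverse (sqrt x))"
      by (rule Cn_comp_real[OF open_pos open_nz smooth_inverse Suc.IH]) auto
    then have "Cn_on n {0<..} (\<lambda>x. inverse (sqrt x) * (1/2))"
      by (rule Cn_bilinear[OF open_pos bounded_bilinear_mult _ Cn_const[OF open_pos]])
    then have "Cn_on n {0<..} (\<lambda>x. (inverse (sqrt x) * (1/2)) * v)"
      by (rule Cn_bilinear[OF open_pos bounded_bilinear_mult _ Cn_const[OF open_pos]])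
    then show "Cn_on n {0<..} (\<lambda>x. (inverse (sqrt x) / 2) * v)"
      by (rule Cn_cong[OF open_pos, rotated]) simp
  qed
qed

lemma smooth_sqrt: "smooth_on {0::real<..} sqrt"
  using Cn_sqrt smooth_on_def by blast

lemma bounded_bilinear_mv: "bounded_bilinear (\<lambda>(A::real^'n^'m) (x::real^'n). A *v x)"
proof
  fix A B :: "real^'n^'m" and x y :: "real^'n" and r :: real
  show "(A + B) *v x = A *v x + B *v x" by (simp add: matrix_vector_mult_add_rdistrib)
  show "A *v (x + y) = A *v x + A *v y" by (simp add: matrix_vector_right_distrib)
  show "(r *\<^sub>R A) *v x = r *\<^sub>R (A *v x)"
    by (simp add: vec_eq_iff matrix_vector_mult_def sum_distrib_left algebra_simps)
  show "A *v (r *\<^sub>R x) = r *\<^sub>R (A *v x)"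
    by (simp add: vec_eq_iff matrix_vector_mult_def sum_distrib_left algebra_simps)
next
  show "\<exists>K. \<forall>A x. norm ((A::real^'n^'m) *v x) \<le> norm A * norm x * K"
  proof (intro exI allI)
    fix A :: "real^'n^'m" and x :: "real^'n"
    have "norm (A *v x) \<le> onorm ((*v) A) * norm x"
      by (simp add: onorm)
    also have "onorm ((*v) A) \<le> (\<Sum>i\<in>UNIV. \<Sum>j\<in>UNIV. \<bar>A $ i $ j\<bar>)"
      by (rule onorm_le_matrix_component_sum)
    also have "\<dots> \<le> (\<Sum>i\<in>(UNIV::'m set). \<Sum>j\<in>(UNIV::'n set). norm A)"
      apply (intro sum_mono)
      proof -
        fix i j
        have "\<bar>A $ i $ j\<bar> \<le> norm (A $ i)" by (metis real_norm_def Finite_Cartesian_Product.norm_nth_le)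
        also have "\<dots> \<le> norm A" by (rule Finite_Cartesian_Product.norm_nth_le)
        finally show "\<bar>A $ i $ j\<bar> \<le> norm A" .
      qed
    finally show "norm (A *v x) \<le> norm A * norm x * (real CARD('m) * real CARD('n))"
      by (simp add: mult_right_mono algebra_simps)
  qed
qed

lemma smooth_const: "open S \<Longrightarrow> smooth_on S (\<lambda>x. c)"
  by (simp add: smooth_on_def Cn_const)

lemma smooth_add: "open S \<Longrightarrow> smooth_on S f \<Longrightarrow> smooth_on S g \<Longrightarrow> smooth_on S (\<lambda>x. f x + g x)"
  by (simp add: smooth_on_def Cn_add)

lemma smooth_linear: "open S \<Longrightarrow> bounded_linear L \<Longrightarrow> smooth_on S f \<Longrightarrow> smooth_on S (\<lambda>x. L (f x))"
  by (simp add: smooth_on_def Cn_linear)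

lemma smooth_minus: "open S \<Longrightarrow> smooth_on S f \<Longrightarrow> smooth_on S (\<lambda>x. - f x)"
  by (rule smooth_linear[OF _ bounded_linear_minus[OF bounded_linear_ident]])

lemma smooth_diff: "open S \<Longrightarrow> smooth_on S f \<Longrightarrow> smooth_on S g \<Longrightarrow> smooth_on S (\<lambda>x. f x - g x)"
proof -
  assume a: "open S" "smooth_on S f" "smooth_on S g"
  have "smooth_on S (\<lambda>x. f x + - g x)" by (rule smooth_add[OF a(1,2) smooth_minus[OF a(1,3)]])
  then show ?thesis by simp
qed

lemma smooth_bilinear: "open S \<Longrightarrow> bounded_bilinear P \<Longrightarrow> smooth_on S f \<Longrightarrow> smooth_on S g \<Longrightarrow> smooth_on S (\<lambda>x. P (f x) (g x))"
  by (simp add: smooth_on_def Cn_bilinear)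

lemma smooth_mult: "open S \<Longrightarrow> smooth_on S f \<Longrightarrow> smooth_on S g \<Longrightarrow> smooth_on S (\<lambda>x. f x * g x :: real)"
  by (rule smooth_bilinear[OF _ bounded_bilinear_mult])

lemma smooth_scaleR: "open S \<Longrightarrow> smooth_on S f \<Longrightarrow> smooth_on S g \<Longrightarrow> smooth_on S (\<lambda>x. f x *\<^sub>R g x)"
  by (rule smooth_bilinear[OF _ bounded_bilinear_scaleR])

lemma smooth_inner: "open S \<Longrightarrow> smooth_on S f \<Longrightarrow> smooth_on S g \<Longrightarrow> smooth_on S (\<lambda>x. f x \<bullet> g x)"
  by (rule smooth_bilinear[OF _ bounded_bilinear_inner])

lemma smooth_mv: "open S \<Longrightarrow> smooth_on S f \<Longrightarrow> smooth_on S g \<Longrightarrow> smooth_on S (\<lambda>x. (f x :: real^'n^'m) *v g x)"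
  using smooth_bilinear[OF _ bounded_bilinear_mv, of S f g] by (simp only: split_def fst_conv snd_conv)

lemma smooth_gx: "open S \<Longrightarrow> smooth_on S gm \<Longrightarrow> smooth_on S u \<Longrightarrow> smooth_on S v \<Longrightarrow> smooth_on S (\<lambda>y. gx gm y (u y) (v y))"
  unfolding gx_def by (rule smooth_inner) (auto intro: smooth_mv)

lemma smooth_subset: "smooth_on S f \<Longrightarrow> T \<subseteq> S \<Longrightarrow> smooth_on T f"
  unfolding smooth_on_def
proof
  fix n assume "\<forall>n. Cn_on n S f" "T \<subseteq> S"
  then show "Cn_on n T f" using Cn_subset[of n S f T] by simp
qed

lemma smooth_cong: "open S \<Longrightarrow> (\<And>x. x \<in> S \<Longrightarrow> f x = g x) \<Longrightarrow> smooth_on S f \<Longrightarrow> smooth_on S g"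
  unfolding smooth_on_def
proof (intro allI)
  fix n assume "open S" "\<And>x. x \<in> S \<Longrightarrow> f x = g x" "\<forall>n. Cn_on n S f"
  then show "Cn_on n S g" using Cn_cong[of S f g n] by blast
qed

lemma smooth_comp_real:
  fixes h :: "'a::euclidean_space \<Rightarrow> real" and \<phi> :: "real \<Rightarrow> real"
  shows "open S \<Longrightarrow> open T \<Longrightarrow> smooth_on T \<phi> \<Longrightarrow> smooth_on S h \<Longrightarrow> h ` S \<subseteq> T \<Longrightarrow> smooth_on S (\<lambda>x. \<phi> (h x))"
proof -
  assume a: "open S" "open T" "smooth_on T \<phi>" "smooth_on S h" "h ` S \<subseteq> T"
  show ?thesis unfolding smooth_on_def
  proof
    fix n show "Cn_on n S (\<lambda>x. \<phi> (h x))"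
      by (rule Cn_comp_real[OF a(1,2,3) _ a(5)]) (use a(4) smooth_on_def in blast)
  qed
qed

lemma smooth_cont: "smooth_on S f \<Longrightarrow> continuous_on S f"
  by (metis Cn_on.simps(1) smooth_on_def)

lemma smooth_deriv: "smooth_on S f \<Longrightarrow> open S \<Longrightarrow> x \<in> S \<Longrightarrow> (f has_derivative frechet_derivative f (at x)) (at x)"
  by (meson Cn_diff_at smooth_on_def)

lemma smooth_differentiable: "smooth_on S f \<Longrightarrow> open S \<Longrightarrow> x \<in> S \<Longrightarrow> f differentiable (at x)"
  using smooth_deriv differentiableI by blast

lemma smooth_inv_sqrt: "open S \<Longrightarrow> smooth_on S h \<Longrightarrow> (\<And>x. x \<in> S \<Longrightarrow> h x > 0) \<Longrightarrow> smooth_on S (\<lambda>x. inverse (sqrt (h x)))"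
proof -
  assume a: "open S" "smooth_on S h" "\<And>x. x \<in> S \<Longrightarrow> h x > 0"
  have "smooth_on S (\<lambda>x. sqrt (h x))"
    by (rule smooth_comp_real[OF a(1) open_pos smooth_sqrt a(2)]) (use a(3) in auto)
  then show ?thesis
    by (rule smooth_comp_real[OF a(1) open_nz smooth_inverse]) (use a(3) in fastforce)
qed

lemma smooth_div: "open S \<Longrightarrow> smooth_on S f \<Longrightarrow> smooth_on S h \<Longrightarrow> (\<And>x. x \<in> S \<Longrightarrow> h x \<noteq> 0) \<Longrightarrow> smooth_on S (\<lambda>x. f x / h x :: real)"
proof -
  assume a: "open S" "smooth_on S f" "smooth_on S h" "\<And>x. x \<in> S \<Longrightarrow> h x \<noteq> 0"
  have "smooth_on S (\<lambda>x. inverse (h x))"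
    by (rule smooth_comp_real[OF a(1) open_nz smooth_inverse a(3)]) (use a(4) in auto)
  then show ?thesis using smooth_mult[OF a(1) a(2)] by (simp add: divide_inverse)
qed




lemma vector_4:
 "(vector [a,b,c,d] ::('a::zero)^4)$1 = a"
 "(vector [a,b,c,d] ::('a::zero)^4)$2 = b"
 "(vector [a,b,c,d] ::('a::zero)^4)$3 = c"
 "(vector [a,b,c,d] ::('a::zero)^4)$4 = d"
  unfolding vector_def by simp_all

definition F4 :: "vec4 \<Rightarrow> vec4 \<Rightarrow> vec4 \<Rightarrow> vec4 \<Rightarrow> real" where
  "F4 a b c d = det (\<chi> i. if i = 3 then c else if i = 4 then d else if i = 1 then a else b :: real^4^4)"

lemma F4_vector: "det (vector [a,b,c,d] :: real^4^4) = F4 a b c d"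
  unfolding F4_def by (rule arg_cong[where f=det]) (simp add: vec_eq_iff forall_4 vector_4)

lemma F4_swap34: "F4 a b c d = det (\<chi> i. if i = 4 then d else if i = 3 then c else if i = 1 then a else b :: real^4^4)"
  unfolding F4_def by (rule arg_cong[where f=det]) (simp add: vec_eq_iff forall_4)

lemma F4_add3: "F4 a b (c + c') d = F4 a b c d + F4 a b c' d"
  unfolding F4_def by (rule det_row_add)

lemma smult_eq: "(r::real) *s (c::vec4) = r *\<^sub>R c" by (simp add: vec_eq_iff)

lemma F4_mul3: "F4 a b (r *\<^sub>R c) d = r * F4 a b c d"
  unfolding F4_def using det_row_mul[where k=3 and a="\<lambda>i. c" and c=r and b="\<lambda>i. if i = 4 then d else if i = 1 then a else b"]
  by (simp only: smult_eq)

lemma F4_add4: "F4 a b c (d + d') = F4 a b c d + F4 a b c d'"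
  unfolding F4_swap34 by (rule det_row_add)

lemma F4_mul4: "F4 a b c (r *\<^sub>R d) = r * F4 a b c d"
  unfolding F4_swap34 using det_row_mul[where k=4 and a="\<lambda>i. d" and c=r and b="\<lambda>i. if i = 3 then c else if i = 1 then a else b"]
  by (simp only: smult_eq)

lemma F4_same: "F4 a b c c = 0"
  unfolding F4_def by (rule det_identical_rows[of 3 4]) (auto simp: row_def vec_eq_iff)

lemma F4_anti: "F4 a b d c = - F4 a b c d"
proof -
  have "0 = F4 a b (c + d) (c + d)" by (simp add: F4_same)
  also have "\<dots> = F4 a b c d + F4 a b d c"
    by (subst F4_add3, subst F4_add4, subst F4_add4, simp add: F4_same)
  finally show ?thesis by linarith
qed

lemma F4_rot: "F4 a b (p *\<^sub>R c + q *\<^sub>R d) (r *\<^sub>R c + s *\<^sub>R d) = (p * s - q * r) * F4 a b c d"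
  using F4_anti[of a b c d]
  by (simp only: F4_add3 F4_add4 F4_mul3 F4_mul4 F4_same) (simp add: algebra_simps)

lemma det4_rot: "det (vector [a, b, p *\<^sub>R c + q *\<^sub>R d, r *\<^sub>R c + s *\<^sub>R d] :: real^4^4) = (p * s - q * r) * det (vector [a,b,c,d] :: real^4^4)"
  by (simp add: F4_vector F4_rot)

lemma det4_neg: "det (vector [a, b, c, - d] :: real^4^4) = - det (vector [a,b,c,d] :: real^4^4)"
  using F4_mul4[of a b c "-1" d] by (simp add: F4_vector)

lemma det4_nz:
  assumes "\<And>\<alpha> \<beta> \<gamma> \<delta>. \<alpha> *\<^sub>R a + \<beta> *\<^sub>R b + \<gamma> *\<^sub>R c + \<delta> *\<^sub>R d = 0 \<Longrightarrow> \<alpha> = 0 \<and> \<beta> = 0 \<and> \<gamma> = 0 \<and> \<delta> = 0"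
  shows "det (vector [a,b,c,d] :: real^4^4) \<noteq> 0"
proof
  let ?M = "vector [a,b,c,d] :: real^4^4"
  assume "det ?M = 0"
  then have "det (transpose ?M) = 0" by simp
  then have "\<not> inj ((*v) (transpose ?M))"
    using invertible_det_nz invertible_left_inverse matrix_left_invertible_injective by blast
  then obtain u v where uv: "u \<noteq> v" "transpose ?M *v u = transpose ?M *v v" unfolding inj_def by blast
  let ?w = "u - v"
  have w0: "?w \<noteq> 0" using uv by simp
  have "transpose ?M *v ?w = 0" using uv by (simp add: matrix_vector_mult_diff_distrib)
  moreover have "transpose ?M *v ?w = (?w$1) *\<^sub>R a + (?w$2) *\<^sub>R b + (?w$3) *\<^sub>R c + (?w$4) *\<^sub>R d"
    unfolding vec_eq_iff transpose_matrix_vector vector_matrix_mult_def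
    by (simp add: sum_4 vector_4 mult.commute)
  ultimately have "?w$1 = 0 \<and> ?w$2 = 0 \<and> ?w$3 = 0 \<and> ?w$4 = 0" using assms by metis
  then have "?w = 0" by (simp add: vec_eq_iff forall_4)
  with w0 show False by simp
qed
lemma det4_cont:
  assumes "continuous_on S a" "continuous_on S b" "continuous_on S c" "continuous_on S d"
  shows "continuous_on S (\<lambda>y. det (vector [a y, b y, c y, d y] :: real^4^4))"
proof -
  have ent: "continuous_on S (\<lambda>y. (\<chi> i. if i = 3 then c y else if i = 4 then d y else if i = 1 then a y else b y :: real^4^4) $ i $ j)" for i j
  proof -
    have cc: "continuous_on S (\<lambda>y. e y $ j)" if "continuous_on S e" for e :: "_ \<Rightarrow> vec4"
      using bounded_linear.continuous_on[OF bounded_linear_vec_nth that] .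
    show ?thesis using exhaust_4[of i] cc[OF assms(1)] cc[OF assms(2)] cc[OF assms(3)] cc[OF assms(4)] by auto
  qed
  have "continuous_on S (\<lambda>y. det (\<chi> i. if i = 3 then c y else if i = 4 then d y else if i = 1 then a y else b y :: real^4^4))"
    unfolding det_def
    apply (rule continuous_on_sum)
    apply (rule continuous_on_mult[OF continuous_on_const])
    apply (rule continuous_on_prod)
    apply (rule ent)
    done
  then show ?thesis by (simp add: F4_vector F4_def)
qed




lemma gx_add1: "gx gm x (u + u') v = gx gm x u v + gx gm x u' v" by (simp add: gx_def inner_add_left)
lemma gx_add2: "gx gm x u (v + v') = gx gm x u v + gx gm x u v'" by (simp add: gx_def matrix_vector_right_distrib inner_add_right)
lemma gx_scale1: "gx gm x (r *\<^sub>R u) v = r * gx gm x u v" by (simp add: gx_def)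
lemma gx_scale2: "gx gm x u (r *\<^sub>R v) = r * gx gm x u v"
  by (simp add: gx_def matrix_vector_mult_scaleR)
lemma gx_minus1: "gx gm x (- u) v = - gx gm x u v" by (simp add: gx_def)
lemma gx_minus2: "gx gm x u (- v) = - gx gm x u v"
  using gx_scale2[of gm x u "-1" v] by simp
lemma gx_diff1: "gx gm x (u - u') v = gx gm x u v - gx gm x u' v" by (simp add: gx_def inner_diff_left)
lemma gx_diff2: "gx gm x u (v - v') = gx gm x u v - gx gm x u v'"
  by (simp add: gx_def matrix_vector_mult_diff_distrib inner_diff_right)
lemma gx_zero1: "gx gm x 0 v = 0" by (simp add: gx_def)
lemma gx_zero2: "gx gm x u 0 = 0" by (simp add: gx_def)
lemmas gx_lin = gx_add1 gx_add2 gx_scale1 gx_scale2 gx_minus1 gx_minus2 gx_diff1 gx_diff2 gx_zero1 gx_zero2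

lemma gx_sym_gen: "transpose (gm x) = gm x \<Longrightarrow> gx gm x u v = gx gm x v u"
proof -
  assume s: "transpose (gm x) = gm x"
  have "gx gm x u v = (u v* gm x) \<bullet> v" by (simp add: gx_def dot_lmul_matrix)
  also have "\<dots> = (transpose (gm x) *v u) \<bullet> v" by simp
  also have "\<dots> = gx gm x v u" using s by (simp add: gx_def inner_commute)
  finally show ?thesis .
qed

lemma flat_inner: "flat gm X x \<bullet> v = gx gm x (X x) v"
  by (simp add: flat_def gx_def dot_lmul_matrix)

lemma span2: "span {a, b} = {\<alpha> *\<^sub>R a + \<beta> *\<^sub>R b | \<alpha> \<beta>. True}"
proof -
  have "span {a, b} = {x. \<exists>k. x - k *\<^sub>R a \<in> span {b}}" by (simp add: span_insert)
  also have "\<dots> = {\<alpha> *\<^sub>R a + \<beta> *\<^sub>R b | \<alpha> \<beta>. True}"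
  proof (intro set_eqI iffI)
    fix x assume "x \<in> {x. \<exists>k. x - k *\<^sub>R a \<in> span {b}}"
    then obtain k c where "x - k *\<^sub>R a = c *\<^sub>R b" by (auto simp: span_singleton)
    then have "x = k *\<^sub>R a + c *\<^sub>R b" by (simp add: algebra_simps)
    then show "x \<in> {\<alpha> *\<^sub>R a + \<beta> *\<^sub>R b | \<alpha> \<beta>. True}" by blast
  next
    fix x assume "x \<in> {\<alpha> *\<^sub>R a + \<beta> *\<^sub>R b | \<alpha> \<beta>. True}"
    then obtain \<alpha> \<beta> where "x = \<alpha> *\<^sub>R a + \<beta> *\<^sub>R b" by blast
    then have "x - \<alpha> *\<^sub>R a \<in> span {b}" by (simp add: span_singleton image_iff)
    then show "x \<in> {x. \<exists>k. x - k *\<^sub>R a \<in> span {b}}" by blast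
  qed
  finally show ?thesis .
qed

lemma matrix_inv_right': "invertible A \<Longrightarrow> A ** matrix_inv A = mat 1"
  unfolding invertible_def matrix_inv_def by (rule someI2_ex) auto

locale adm =
  fixes U :: "vec4 set" and gm :: "vec4 \<Rightarrow> real^4^4" and k t :: "vec4 \<Rightarrow> vec4"
    and l \<tau> :: "vec4 \<Rightarrow> real"
  assumes adm: "admissible U gm k t l \<tau>"
begin

lemma openU: "open U" using adm unfolding admissible_def by simp
lemma symU: "x \<in> U \<Longrightarrow> transpose (gm x) = gm x" using adm unfolding admissible_def by simp
lemma invU: "x \<in> U \<Longrightarrow> invertible (gm x)" using adm unfolding admissible_def by simp
lemma sm_gm: "smooth_on U gm" using adm unfolding admissible_def by simp
lemma sm_k: "smooth_on U k" using adm unfolding admissible_def by simp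
lemma sm_t: "smooth_on U t" using adm unfolding admissible_def by simp
lemma sm_l: "smooth_on U l" using adm unfolding admissible_def by simp
lemma sm_tau: "smooth_on U \<tau>" using adm unfolding admissible_def by simp
lemma indep: "x \<in> U \<Longrightarrow> a *\<^sub>R k x + b *\<^sub>R t x = 0 \<Longrightarrow> a = 0 \<and> b = 0"
  using adm unfolding admissible_def by blast
lemma posH: "x \<in> U \<Longrightarrow> v \<in> Hd gm k t x \<Longrightarrow> v \<noteq> 0 \<Longrightarrow> gx gm x v v > 0"
  using adm unfolding admissible_def by blast
lemma lieH: "smooth_on U X \<Longrightarrow> (\<forall>y\<in>U. X y \<in> Hd gm k t y) \<Longrightarrow> y \<in> U \<Longrightarrow>
    lie k X y \<in> Hd gm k t y \<and> lie t X y \<in> Hd gm k t y"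
  using adm unfolding admissible_def by blast
lemma t_grad: "x \<in> U \<Longrightarrow> t x = l x *\<^sub>R grad gm \<tau> x"
  using adm unfolding admissible_def by blast
lemma grad_kt: "x \<in> U \<Longrightarrow> grad gm (\<lambda>y. gx gm y (k y) (t y)) x \<in> Vd k t x"
  using adm unfolding admissible_def by blast
lemma grad_kk: "x \<in> U \<Longrightarrow> grad gm (\<lambda>y. gx gm y (k y) (k y)) x \<in> Vd k t x"
  using adm unfolding admissible_def by blast

lemma sym: "x \<in> U \<Longrightarrow> gx gm x u v = gx gm x v u"
  using gx_sym_gen symU by blast

lemma Vd_iff: "v \<in> Vd k t x \<longleftrightarrow> (\<exists>a b. v = a *\<^sub>R k x + b *\<^sub>R t x)"
  unfolding Vd_def span2 by blast

lemma Hd_iff: "v \<in> Hd gm k t x \<longleftrightarrow> gx gm x v (k x) = 0 \<and> gx gm x v (t x) = 0"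
proof
  assume "v \<in> Hd gm k t x"
  moreover have "k x \<in> Vd k t x" "t x \<in> Vd k t x" unfolding Vd_iff
    by (metis add.right_neutral scaleR_one scaleR_zero_left, metis add_0 scaleR_one scaleR_zero_left)
  ultimately show "gx gm x v (k x) = 0 \<and> gx gm x v (t x) = 0" unfolding Hd_def by blast
next
  assume "gx gm x v (k x) = 0 \<and> gx gm x v (t x) = 0"
  then show "v \<in> Hd gm k t x" unfolding Hd_def by (auto simp: Vd_iff gx_lin)
qed

lemma k_nz: "x \<in> U \<Longrightarrow> k x \<noteq> 0" using indep[of x 1 0] by auto
lemma t_nz: "x \<in> U \<Longrightarrow> t x \<noteq> 0" using indep[of x 0 1] by auto

lemma Gnz: assumes x: "x \<in> U" shows "Gfun gm k t x \<noteq> 0"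
proof
  assume G0: "Gfun gm k t x = 0"
  let ?A = "gx gm x (k x) (k x)" and ?B = "gx gm x (k x) (t x)" and ?C = "gx gm x (t x) (t x)"
  have BA: "gx gm x (t x) (k x) = ?B" using sym[OF x] by simp
  have key: False if ab: "a \<noteq> 0 \<or> b \<noteq> 0" "a * ?A + b * ?B = 0" "a * ?B + b * ?C = 0" for a b
  proof -
    let ?v = "a *\<^sub>R k x + b *\<^sub>R t x"
    have "gx gm x ?v (k x) = a * ?A + b * ?B" using BA by (simp add: gx_lin)
    moreover have "gx gm x ?v (t x) = a * ?B + b * ?C" by (simp add: gx_lin)
    ultimately have vH: "?v \<in> Hd gm k t x" using ab by (simp add: Hd_iff)
    have "?v \<noteq> 0" using indep[OF x, of a b] ab(1) by auto
    then have "gx gm x ?v ?v > 0" using posH[OF x vH] by simp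
    moreover have "gx gm x ?v ?v = a * gx gm x ?v (k x) + b * gx gm x ?v (t x)" by (simp add: gx_lin)
    ultimately show False using vH by (simp add: Hd_iff)
  qed
  have G: "?A * ?C - ?B ^ 2 = 0" using G0 unfolding Gfun_def .
  show False
  proof (cases "?B \<noteq> 0 \<or> ?A \<noteq> 0")
    case True
    then show False using key[of ?B "- ?A"] G by (auto simp: algebra_simps power2_eq_square)
  next
    case False
    show False
    proof (cases "?C \<noteq> 0")
      case True then show False using key[of ?C "- ?B"] G False by (auto simp: algebra_simps power2_eq_square)
    next
      case False2: False
      then show False using key[of 1 0] False by auto
    qed
  qed
qed

definition ca :: "vec4 \<Rightarrow> vec4 \<Rightarrow> real" where
  "ca x v = (gx gm x v (k x) * gx gm x (t x) (t x) - gx gm x v (t x) * gx gm x (k x) (t x)) / Gfun gm k t x"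
definition cb :: "vec4 \<Rightarrow> vec4 \<Rightarrow> real" where
  "cb x v = (gx gm x v (t x) * gx gm x (k x) (k x) - gx gm x v (k x) * gx gm x (k x) (t x)) / Gfun gm k t x"
definition P :: "vec4 \<Rightarrow> vec4 \<Rightarrow> vec4" where
  "P x v = v - ca x v *\<^sub>R k x - cb x v *\<^sub>R t x"

lemma proj_alg1: "A*C - B^2 \<noteq> (0::real) \<Longrightarrow>
   vk - (vk*C - vt*B)/(A*C - B^2) * A - (vt*A - vk*B)/(A*C - B^2) * B = 0"
proof -
  assume G: "A*C - B^2 \<noteq> 0"
  have "(vk*C - vt*B)/(A*C - B^2) * A + (vt*A - vk*B)/(A*C - B^2) * B
      = ((vk*C - vt*B) * A + (vt*A - vk*B) * B)/(A*C - B^2)" by (simp add: add_divide_distrib)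
  also have "(vk*C - vt*B) * A + (vt*A - vk*B) * B = vk * (A*C - B^2)" by (simp add: algebra_simps power2_eq_square)
  finally have "(vk*C - vt*B)/(A*C - B^2) * A + (vt*A - vk*B)/(A*C - B^2) * B = vk * (A*C - B^2)/(A*C - B^2)" .
  then have "(vk*C - vt*B)/(A*C - B^2) * A + (vt*A - vk*B)/(A*C - B^2) * B = vk" using G by simp
  then show ?thesis by linarith
qed
lemma proj_alg2: "A*C - B^2 \<noteq> (0::real) \<Longrightarrow>
   vt - (vk*C - vt*B)/(A*C - B^2) * B - (vt*A - vk*B)/(A*C - B^2) * C = 0"
proof -
  assume G: "A*C - B^2 \<noteq> 0"
  have "(vk*C - vt*B)/(A*C - B^2) * B + (vt*A - vk*B)/(A*C - B^2) * C
      = ((vk*C - vt*B) * B + (vt*A - vk*B) * C)/(A*C - B^2)" by (simp add: add_divide_distrib)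
  also have "(vk*C - vt*B) * B + (vt*A - vk*B) * C = vt * (A*C - B^2)" by (simp add: algebra_simps power2_eq_square)
  finally have "(vk*C - vt*B)/(A*C - B^2) * B + (vt*A - vk*B)/(A*C - B^2) * C = vt * (A*C - B^2)/(A*C - B^2)" .
  then have "(vk*C - vt*B)/(A*C - B^2) * B + (vt*A - vk*B)/(A*C - B^2) * C = vt" using G by simp
  then show ?thesis by linarith
qed

lemma P_H: assumes x: "x \<in> U" shows "P x v \<in> Hd gm k t x"
proof -
  have G: "Gfun gm k t x \<noteq> 0" by (rule Gnz[OF x])
  have BA: "gx gm x (t x) (k x) = gx gm x (k x) (t x)" using sym[OF x] by simp
  have "gx gm x (P x v) (k x) = 0" using G BA proj_alg1
    unfolding P_def ca_def cb_def Gfun_def by (simp add: gx_lin)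
  moreover have "gx gm x (P x v) (t x) = 0" using G BA proj_alg2
    unfolding P_def ca_def cb_def Gfun_def by (simp add: gx_lin)
  ultimately show ?thesis by (simp add: Hd_iff)
qed

lemma ca_H: "v \<in> Hd gm k t x \<Longrightarrow> ca x v = 0" unfolding ca_def by (simp add: Hd_iff)
lemma cb_H: "v \<in> Hd gm k t x \<Longrightarrow> cb x v = 0" unfolding cb_def by (simp add: Hd_iff)
lemma P_id: "v \<in> Hd gm k t x \<Longrightarrow> P x v = v" unfolding P_def by (simp add: ca_H cb_H)
lemma P_decomp: "v = P x v + ca x v *\<^sub>R k x + cb x v *\<^sub>R t x" unfolding P_def by simp

lemma ca_k: "x \<in> U \<Longrightarrow> ca x (k x) = 1" and cb_k: "x \<in> U \<Longrightarrow> cb x (k x) = 0"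
  and ca_t: "x \<in> U \<Longrightarrow> ca x (t x) = 0" and cb_t: "x \<in> U \<Longrightarrow> cb x (t x) = 1"
  using Gnz[of x] sym[of x "k x" "t x"] unfolding ca_def cb_def Gfun_def
  by (auto simp: field_simps power2_eq_square)

lemma ca_lin: "ca x (a *\<^sub>R u + b *\<^sub>R w) = a * ca x u + b * ca x w"
  unfolding ca_def by (simp add: gx_lin add_divide_distrib diff_divide_distrib algebra_simps)
lemma cb_lin: "cb x (a *\<^sub>R u + b *\<^sub>R w) = a * cb x u + b * cb x w"
  unfolding cb_def by (simp add: gx_lin add_divide_distrib diff_divide_distrib algebra_simps)

lemma Hd_sub: "x \<in> U \<Longrightarrow> Hd gm k t x \<subseteq> span E \<Longrightarrow> (UNIV :: vec4 set) \<subseteq> span ({k x, t x} \<union> E)"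
proof
  fix v :: vec4 assume x: "x \<in> U" and HE: "Hd gm k t x \<subseteq> span E"
  have "P x v \<in> span ({k x, t x} \<union> E)" using P_H[OF x, of v] HE span_mono[of E "{k x, t x} \<union> E"] by auto
  moreover have "ca x v *\<^sub>R k x \<in> span ({k x, t x} \<union> E)" by (simp add: span_base span_mul)
  moreover have "cb x v *\<^sub>R t x \<in> span ({k x, t x} \<union> E)" by (simp add: span_base span_mul)
  ultimately have "P x v + ca x v *\<^sub>R k x + cb x v *\<^sub>R t x \<in> span ({k x, t x} \<union> E)" by (intro span_add)
  then show "v \<in> span ({k x, t x} \<union> E)" using P_decomp[of v x] by simp
qed

lemma dim4: "dim (UNIV :: vec4 set) = 4" by simp

lemma Hd_not_small: assumes x: "x \<in> U" and fin: "finite E" and c: "card E \<le> 1" shows "\<not> Hd gm k t x \<subseteq> span E"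
proof
  assume "Hd gm k t x \<subseteq> span E"
  then have "(UNIV :: vec4 set) \<subseteq> span ({k x, t x} \<union> E)" by (rule Hd_sub[OF x])
  then have "dim (UNIV :: vec4 set) \<le> card ({k x, t x} \<union> E)" by (intro dim_le_card) (use fin in auto)
  also have "\<dots> \<le> card {k x, t x} + card E" by (rule card_Un_le)
  also have "\<dots> \<le> 2 + 1" using c card_insert_le_m1[of 2 "{t x}" "k x"] by (simp add: card_insert_if)
  finally show False by simp
qed

lemma gx_span_zero: assumes "\<forall>s\<in>S. gx gm x v s = 0" "y \<in> span S" shows "gx gm x v y = 0"
proof -
  have "subspace {a. gx gm x v a = 0}" unfolding subspace_def by (auto simp: gx_lin)
  then have "span S \<subseteq> {a. gx gm x v a = 0}" using assms(1) by (intro span_minimal) auto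
  then show ?thesis using assms(2) by auto
qed

lemma notin_span: "\<forall>s\<in>S. gx gm x v s = 0 \<Longrightarrow> gx gm x v v \<noteq> 0 \<Longrightarrow> v \<notin> span S"
  using gx_span_zero by blast

lemma inv_sqrt_sq: "p > 0 \<Longrightarrow> inverse (sqrt p) * (inverse (sqrt p) * p) = (1::real)"
proof -
  assume p: "p > 0"
  have "sqrt p * sqrt p = p" using p by simp
  moreover have "sqrt p > 0" using p by simp
  ultimately show ?thesis by (metis mult.assoc mult.commute right_inverse mult_1_right less_irrefl inverse_mult_distrib)
qed

definition ON :: "vec4 \<Rightarrow> vec4 \<Rightarrow> vec4 \<Rightarrow> bool" where
  "ON x e1 e2 = (e1 \<in> Hd gm k t x \<and> e2 \<in> Hd gm k t x \<and> gx gm x e1 e1 = 1 \<and> gx gm x e2 e2 = 1 \<and> gx gm x e1 e2 = 0)"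

lemma Hd_scale: "v \<in> Hd gm k t x \<Longrightarrow> r *\<^sub>R v \<in> Hd gm k t x" by (simp add: Hd_iff gx_lin)
lemma Hd_add: "v \<in> Hd gm k t x \<Longrightarrow> w \<in> Hd gm k t x \<Longrightarrow> v + w \<in> Hd gm k t x" by (simp add: Hd_iff gx_lin)
lemma Hd_diff: "v \<in> Hd gm k t x \<Longrightarrow> w \<in> Hd gm k t x \<Longrightarrow> v - w \<in> Hd gm k t x" by (simp add: Hd_iff gx_lin)
lemma Hd_neg: "v \<in> Hd gm k t x \<Longrightarrow> - v \<in> Hd gm k t x" by (simp add: Hd_iff gx_lin)
lemma Hd_k: "x \<in> U \<Longrightarrow> v \<in> Hd gm k t x \<Longrightarrow> gx gm x (k x) v = 0" using sym by (simp add: Hd_iff)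
lemma Hd_t: "x \<in> U \<Longrightarrow> v \<in> Hd gm k t x \<Longrightarrow> gx gm x (t x) v = 0" using sym by (simp add: Hd_iff)

lemma ON_exists: assumes x: "x \<in> U" shows "\<exists>e1 e2. ON x e1 e2"
proof -
  obtain h1 where h1: "h1 \<in> Hd gm k t x" "h1 \<notin> span {}"
    using Hd_not_small[OF x, of "{}"] by auto
  have h1nz: "h1 \<noteq> 0" using h1(2) by auto
  define e1 where "e1 = inverse (sqrt (gx gm x h1 h1)) *\<^sub>R h1"
  have p1: "gx gm x h1 h1 > 0" using posH[OF x h1(1) h1nz] .
  have e1H: "e1 \<in> Hd gm k t x" unfolding e1_def using h1(1) by (rule Hd_scale)
  have e1n: "gx gm x e1 e1 = 1" unfolding e1_def using p1
    by (simp add: gx_lin inv_sqrt_sq)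
  obtain h2 where h2: "h2 \<in> Hd gm k t x" "h2 \<notin> span {e1}"
    using Hd_not_small[OF x, of "{e1}"] by auto
  define h2' where "h2' = h2 - gx gm x h2 e1 *\<^sub>R e1"
  have h2'H: "h2' \<in> Hd gm k t x" unfolding h2'_def by (intro Hd_diff Hd_scale h2(1) e1H)
  have h2'nz: "h2' \<noteq> 0"
  proof
    assume "h2' = 0"
    then have "h2 = gx gm x h2 e1 *\<^sub>R e1" unfolding h2'_def by simp
    then have "h2 \<in> span {e1}" by (metis span_base span_mul singletonI)
    with h2(2) show False by simp
  qed
  have h2'e1: "gx gm x h2' e1 = 0" unfolding h2'_def by (simp add: gx_lin e1n)
  have p2: "gx gm x h2' h2' > 0" using posH[OF x h2'H h2'nz] .
  define e2 where "e2 = inverse (sqrt (gx gm x h2' h2')) *\<^sub>R h2'"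
  have e2H: "e2 \<in> Hd gm k t x" unfolding e2_def using h2'H by (rule Hd_scale)
  have e2n: "gx gm x e2 e2 = 1" unfolding e2_def using p2
    by (simp add: gx_lin inv_sqrt_sq)
  have e12: "gx gm x e1 e2 = 0" unfolding e2_def using h2'e1 sym[OF x, of h2' e1] by (simp add: gx_lin)
  show ?thesis unfolding ON_def using e1H e2H e1n e2n e12 by blast
qed

lemma ON_span: assumes x: "x \<in> U" and on: "ON x e1 e2" and h: "h \<in> Hd gm k t x"
  shows "h = gx gm x h e1 *\<^sub>R e1 + gx gm x h e2 *\<^sub>R e2"
proof (rule ccontr)
  assume ne: "h \<noteq> gx gm x h e1 *\<^sub>R e1 + gx gm x h e2 *\<^sub>R e2"
  define h' where "h' = h - gx gm x h e1 *\<^sub>R e1 - gx gm x h e2 *\<^sub>R e2"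
  have o: "e1 \<in> Hd gm k t x" "e2 \<in> Hd gm k t x" "gx gm x e1 e1 = 1" "gx gm x e2 e2 = 1" "gx gm x e1 e2 = 0"
    using on unfolding ON_def by auto
  have o21: "gx gm x e2 e1 = 0" using o(5) sym[OF x] by metis
  have h'H: "h' \<in> Hd gm k t x" unfolding h'_def by (intro Hd_diff Hd_scale h o(1,2))
  have h'nz: "h' \<noteq> 0" using ne unfolding h'_def by (simp add: algebra_simps)
  have h'e1: "gx gm x h' e1 = 0" unfolding h'_def using o o21 by (simp add: gx_lin)
  have h'e2: "gx gm x h' e2 = 0" unfolding h'_def using o o21 by (simp add: gx_lin)
  have hk: "gx gm x h' (k x) = 0" "gx gm x h' (t x) = 0" using h'H by (auto simp: Hd_iff)
  have e1kt: "gx gm x e1 (k x) = 0" "gx gm x e1 (t x) = 0" "gx gm x e2 (k x) = 0" "gx gm x e2 (t x) = 0"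
    using o(1,2) by (auto simp: Hd_iff)
  have n1: "k x \<notin> span {}" using k_nz[OF x] by simp
  have n2: "t x \<notin> span {k x}"
  proof
    assume "t x \<in> span {k x}"
    then have "t x \<in> range (\<lambda>c. c *\<^sub>R k x)" by (simp add: span_singleton)
    then obtain c where "t x = c *\<^sub>R k x" by blast
    then have "c *\<^sub>R k x + (-1) *\<^sub>R t x = 0" by simp
    then show False using indep[OF x, of c "-1"] by simp
  qed
  have n3: "e1 \<notin> span {t x, k x}" by (rule notin_span) (use e1kt o in auto)
  have n4: "e2 \<notin> span {e1, t x, k x}" by (rule notin_span) (use e1kt o o21 in auto)
  have n5: "h' \<notin> span {e2, e1, t x, k x}" by (rule notin_span) (use hk h'e1 h'e2 posH[OF x h'H h'nz] in auto)
  have "dim {h', e2, e1, t x, k x} = 5"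
    using n1 n2 n3 n4 n5 by (simp add: dim_insert)
  moreover have "dim {h', e2, e1, t x, k x} \<le> 4" using dim_subset_UNIV_cart[of "{h', e2, e1, t x, k x}"] by simp
  ultimately show False by simp
qed

lemma posframe_iff: "posframe gm k t x e1 e2 \<longleftrightarrow> ON x e1 e2 \<and> det (vector [k x, t x, e1, e2] :: real^4^4) > 0"
  unfolding posframe_def ON_def by auto

lemma ON_facts: "ON x e1 e2 \<Longrightarrow> x \<in> U \<Longrightarrow> e1 \<in> Hd gm k t x \<and> e2 \<in> Hd gm k t x \<and> gx gm x e1 e1 = 1 \<and> gx gm x e2 e2 = 1 \<and>
   gx gm x e1 e2 = 0 \<and> gx gm x e2 e1 = 0 \<and> gx gm x (k x) e1 = 0 \<and> gx gm x (k x) e2 = 0 \<and> gx gm x (t x) e1 = 0 \<and> gx gm x (t x) e2 = 0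
   \<and> gx gm x e1 (k x) = 0 \<and> gx gm x e2 (k x) = 0 \<and> gx gm x e1 (t x) = 0 \<and> gx gm x e2 (t x) = 0"
  unfolding ON_def using sym[of x e1 e2] Hd_k Hd_t by (auto simp: Hd_iff)

lemma det_ON_nz: assumes x: "x \<in> U" and on: "ON x e1 e2" shows "det (vector [k x, t x, e1, e2] :: real^4^4) \<noteq> 0"
proof (rule det4_nz)
  fix \<alpha> \<beta> \<gamma> \<delta> assume z: "\<alpha> *\<^sub>R k x + \<beta> *\<^sub>R t x + \<gamma> *\<^sub>R e1 + \<delta> *\<^sub>R e2 = 0"
  note o = ON_facts[OF on x]
  have "gx gm x (\<alpha> *\<^sub>R k x + \<beta> *\<^sub>R t x + \<gamma> *\<^sub>R e1 + \<delta> *\<^sub>R e2) e1 = \<gamma>" using o by (simp add: gx_lin)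
  then have g: "\<gamma> = 0" using z by (simp add: gx_lin)
  have "gx gm x (\<alpha> *\<^sub>R k x + \<beta> *\<^sub>R t x + \<gamma> *\<^sub>R e1 + \<delta> *\<^sub>R e2) e2 = \<delta>" using o by (simp add: gx_lin)
  then have d: "\<delta> = 0" using z by (simp add: gx_lin)
  have "\<alpha> = 0 \<and> \<beta> = 0" using indep[OF x, of \<alpha> \<beta>] z g d by simp
  then show "\<alpha> = 0 \<and> \<beta> = 0 \<and> \<gamma> = 0 \<and> \<delta> = 0" using g d by simp
qed

lemma posframe_exists: assumes x: "x \<in> U" shows "\<exists>e1 e2. posframe gm k t x e1 e2"
proof -
  obtain e1 e2 where on: "ON x e1 e2" using ON_exists[OF x] by blast
  have on': "ON x e1 (- e2)" using on unfolding ON_def by (auto simp: gx_lin Hd_neg)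
  have nz: "det (vector [k x, t x, e1, e2] :: real^4^4) \<noteq> 0" by (rule det_ON_nz[OF x on])
  show ?thesis
  proof (cases "det (vector [k x, t x, e1, e2] :: real^4^4) > 0")
    case True then show ?thesis using on posframe_iff by blast
  next
    case False
    then have "det (vector [k x, t x, e1, - e2] :: real^4^4) > 0" using nz det4_neg[of "k x" "t x" e1 e2] by simp
    then show ?thesis using on' posframe_iff by blast
  qed
qed

lemma rot_alg:
  fixes a b c d :: real
  assumes "a^2 + b^2 = 1" "c^2 + d^2 = 1" "a*c + b*d = 0" "a*d - b*c > 0"
  shows "c = -b \<and> d = a"
proof -
  have "(a*d - b*c)^2 = (a^2 + b^2) * (c^2 + d^2) - (a*c + b*d)^2" by (simp add: algebra_simps power2_eq_square)
  then have "(a*d - b*c)^2 = 1" using assms by simp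
  then have e: "a*d - b*c = 1" using assms(4) by (metis abs_of_pos power2_eq_1_iff abs_1 abs_power2 real_sqrt_abs real_sqrt_one)
  have "(c + b)^2 + (d - a)^2 = (c^2 + d^2) + (a^2 + b^2) - 2 * (a*d - b*c)" by (simp add: algebra_simps power2_eq_square)
  then have "(c + b)^2 + (d - a)^2 = 0" using assms e by simp
  then have "c + b = 0 \<and> d - a = 0" by (simp add: sum_power2_eq_zero_iff)
  then show ?thesis by simp
qed

lemma rot: assumes x: "x \<in> U" and pe: "posframe gm k t x e1 e2" and pf: "posframe gm k t x f1 f2"
  shows "f1 = gx gm x f1 e1 *\<^sub>R e1 + gx gm x f1 e2 *\<^sub>R e2 \<and> f2 = (- gx gm x f1 e2) *\<^sub>R e1 + gx gm x f1 e1 *\<^sub>R e2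
     \<and> (gx gm x f1 e1)^2 + (gx gm x f1 e2)^2 = 1"
proof -
  have one: "ON x e1 e2" "det (vector [k x, t x, e1, e2] :: real^4^4) > 0" using pe posframe_iff by auto
  have two: "ON x f1 f2" "det (vector [k x, t x, f1, f2] :: real^4^4) > 0" using pf posframe_iff by auto
  note oe = ON_facts[OF one(1) x] and of = ON_facts[OF two(1) x]
  define a where "a = gx gm x f1 e1"
  define b where "b = gx gm x f1 e2"
  define c where "c = gx gm x f2 e1"
  define d where "d = gx gm x f2 e2"
  have f1: "f1 = a *\<^sub>R e1 + b *\<^sub>R e2" unfolding a_def b_def by (rule ON_span[OF x one(1)]) (use of in simp)
  have f2: "f2 = c *\<^sub>R e1 + d *\<^sub>R e2" unfolding c_def d_def by (rule ON_span[OF x one(1)]) (use of in simp)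
  have "gx gm x f1 f1 = a^2 + b^2"
    by (subst (2) f1) (simp add: gx_lin a_def b_def power2_eq_square)
  then have n1: "a^2 + b^2 = 1" using of by simp
  have "gx gm x f2 f2 = c^2 + d^2"
    by (subst (2) f2) (simp add: gx_lin c_def d_def power2_eq_square)
  then have n2: "c^2 + d^2 = 1" using of by simp
  have "gx gm x f1 f2 = a*c + b*d"
    by (subst f2) (simp add: gx_lin a_def b_def)
  then have n3: "a*c + b*d = 0" using of by simp
  have "det (vector [k x, t x, f1, f2] :: real^4^4) = (a*d - b*c) * det (vector [k x, t x, e1, e2] :: real^4^4)"
    using f1 f2 det4_rot by simp
  then have n4: "a*d - b*c > 0" using one(2) two(2) by (metis zero_less_mult_pos2)
  have "c = -b \<and> d = a" by (rule rot_alg[OF n1 n2 n3 n4])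
  then show ?thesis using f1 f2 n1 unfolding a_def b_def by simp
qed

definition JL :: "vec4 \<Rightarrow> vec4 \<Rightarrow> vec4 \<Rightarrow> vec4 \<Rightarrow> vec4" where
  "JL x e1 e2 v = ca x v *\<^sub>R t x - cb x v *\<^sub>R k x + gx gm x v e1 *\<^sub>R e2 - gx gm x v e2 *\<^sub>R e1"

lemma ca_add: "ca x (u + w) = ca x u + ca x w" using ca_lin[of x 1 u 1 w] by simp
lemma ca_scale: "ca x (r *\<^sub>R u) = r * ca x u" using ca_lin[of x r u 0 u] by simp
lemma cb_add: "cb x (u + w) = cb x u + cb x w" using cb_lin[of x 1 u 1 w] by simp
lemma cb_scale: "cb x (r *\<^sub>R u) = r * cb x u" using cb_lin[of x r u 0 u] by simp

lemma JL_linear: "linear (JL x e1 e2)"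
  by (rule linearI) (simp_all add: JL_def ca_add cb_add ca_scale cb_scale gx_lin algebra_simps)

lemma JL_H: assumes x: "x \<in> U" and on: "ON x e1 e2" and h: "h \<in> Hd gm k t x"
  shows "JL x e1 e2 h = gx gm x h e1 *\<^sub>R e2 - gx gm x h e2 *\<^sub>R e1"
  unfolding JL_def using ca_H[OF h] cb_H[OF h] by simp

lemma JL_H_in: assumes x: "x \<in> U" and on: "ON x e1 e2" and h: "h \<in> Hd gm k t x"
  shows "JL x e1 e2 h \<in> Hd gm k t x"
  unfolding JL_H[OF x on h] using ON_facts[OF on x] by (intro Hd_diff Hd_scale) auto

lemma Jop_eq: assumes x: "x \<in> U" and pe: "posframe gm k t x e1 e2"
  shows "Jop gm k t x = JL x e1 e2"
proof -
  have on: "ON x e1 e2" using pe posframe_iff by blast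
  note o = ON_facts[OF on x]
  let ?L = "JL x e1 e2"
  have Lk: "?L (k x) = t x" unfolding JL_def using ca_k[OF x] cb_k[OF x] o by simp
  have Lt: "?L (t x) = - k x" unfolding JL_def using ca_t[OF x] cb_t[OF x] o by simp
  have Lf: "?L f1 = f2 \<and> ?L f2 = - f1" if pf: "posframe gm k t x f1 f2" for f1 f2
  proof -
    have onf: "ON x f1 f2" using pf posframe_iff by blast
    note of = ON_facts[OF onf x]
    note r = rot[OF x pe pf]
    let ?a = "gx gm x f1 e1" and ?b = "gx gm x f1 e2"
    have "?L f1 = ?a *\<^sub>R e2 - ?b *\<^sub>R e1" by (rule JL_H[OF x on of[THEN conjunct1]])
    also have "\<dots> = f2" using r by (simp add: algebra_simps)
    finally have 1: "?L f1 = f2" .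
    have "?L f2 = gx gm x f2 e1 *\<^sub>R e2 - gx gm x f2 e2 *\<^sub>R e1" by (rule JL_H[OF x on]) (use of in blast)
    also have "gx gm x f2 e1 = - ?b" using r o by (subst (asm) conj_commute) (metis (no_types, lifting) add.commute add.right_neutral gx_add1 gx_scale1 mult.right_neutral mult_zero_right)
    also have "gx gm x f2 e2 = ?a" using r o by (metis (no_types, lifting) add.left_neutral gx_add1 gx_scale1 mult.right_neutral mult_zero_right)
    finally have "?L f2 = (- ?b) *\<^sub>R e2 - ?a *\<^sub>R e1" .
    also have "\<dots> = - f1" using r by (metis (no_types, lifting) add.commute minus_diff_eq scaleR_minus_left diff_conv_add_uminus minus_add_distrib)
    finally show ?thesis using 1 by simp
  qed
  have spec: "linear ?L \<and> ?L (k x) = t x \<and> ?L (t x) = - k x \<and>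
      (\<forall>f1 f2. posframe gm k t x f1 f2 \<longrightarrow> ?L f1 = f2 \<and> ?L f2 = - f1)"
    using JL_linear Lk Lt Lf by blast
  show ?thesis unfolding Jop_def
  proof (rule the_equality)
    show "linear ?L \<and> ?L (k x) = t x \<and> ?L (t x) = - k x \<and>
      (\<forall>f1 f2. posframe gm k t x f1 f2 \<longrightarrow> ?L f1 = f2 \<and> ?L f2 = - f1)" by (rule spec)
  next
    fix L' assume L': "linear L' \<and> L' (k x) = t x \<and> L' (t x) = - k x \<and>
      (\<forall>f1 f2. posframe gm k t x f1 f2 \<longrightarrow> L' f1 = f2 \<and> L' f2 = - f1)"
    then have lin: "linear L'" and L'k: "L' (k x) = t x" and L't: "L' (t x) = - k x"
      and L'e: "L' e1 = e2" "L' e2 = - e1" using pe by auto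
    have add: "L' (u + w) = L' u + L' w" and sc: "L' (r *\<^sub>R u) = r *\<^sub>R L' u" for u w r
      using lin unfolding linear_iff by auto
    show "L' = ?L"
    proof
      fix v
      have Pv: "P x v = gx gm x (P x v) e1 *\<^sub>R e1 + gx gm x (P x v) e2 *\<^sub>R e2"
        by (rule ON_span[OF x on P_H[OF x]])
      have g1: "gx gm x (P x v) e1 = gx gm x v e1" unfolding P_def using o by (simp add: gx_lin)
      have g2: "gx gm x (P x v) e2 = gx gm x v e2" unfolding P_def using o by (simp add: gx_lin)
      have v: "v = gx gm x v e1 *\<^sub>R e1 + gx gm x v e2 *\<^sub>R e2 + ca x v *\<^sub>R k x + cb x v *\<^sub>R t x"
        using P_decomp[of v x] Pv g1 g2 by simp
      have "L' v = gx gm x v e1 *\<^sub>R L' e1 + gx gm x v e2 *\<^sub>R L' e2 + ca x v *\<^sub>R L' (k x) + cb x v *\<^sub>R L' (t x)"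
        by (subst v) (simp add: add sc)
      also have "\<dots> = ?L v" unfolding JL_def L'e L'k L't by (simp add: algebra_simps)
      finally show "L' v = ?L v" .
    qed
  qed
qed

end




lemma fd_inner:
  assumes "A differentiable (at x)" "B differentiable (at x)"
  shows "frechet_derivative (\<lambda>y. A y \<bullet> B y) (at x) v = frechet_derivative A (at x) v \<bullet> B x + A x \<bullet> frechet_derivative B (at x) v"
proof -
  have "((\<lambda>y. A y \<bullet> B y) has_derivative (\<lambda>h. A x \<bullet> frechet_derivative B (at x) h + frechet_derivative A (at x) h \<bullet> B x)) (at x)"
    using bounded_bilinear.FDERIV[OF bounded_bilinear_inner frechet_derivative_works[THEN iffD1, OF assms(1)]
        frechet_derivative_works[THEN iffD1, OF assms(2)]] .
  then have "frechet_derivative (\<lambda>y. A y \<bullet> B y) (at x) = (\<lambda>h. A x \<bullet> frechet_derivative B (at x) h + frechet_derivative A (at x) h \<bullet> B x)"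
    by (rule frechet_derivative_at[symmetric])
  then show ?thesis by simp
qed

lemma fd_zero_open:
  assumes "open W" "x \<in> W" "\<And>y. y \<in> W \<Longrightarrow> h y = 0"
  shows "frechet_derivative h (at x) v = 0"
proof -
  have "((\<lambda>y. 0) has_derivative (\<lambda>v. 0)) (at x)" by simp
  then have "(h has_derivative (\<lambda>v. 0)) (at x)"
    by (rule has_derivative_transform_within_open[OF _ assms(1,2)]) (use assms(3) in auto)
  then have "frechet_derivative h (at x) = (\<lambda>v. 0)" by (rule frechet_derivative_at[symmetric])
  then show ?thesis by simp
qed

lemma fd_linear: "F differentiable (at x) \<Longrightarrow> linear (frechet_derivative F (at x))"
  using has_derivative_linear frechet_derivative_works by blast

lemma dform_anti: "dform \<alpha> x u v = - dform \<alpha> x v u" unfolding dform_def by (simp add: inner_commute)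
lemma dform_self: "dform \<alpha> x u u = 0" unfolding dform_def by simp

lemma dform_lin1:
  assumes "\<alpha> differentiable (at x)"
  shows "dform \<alpha> x (a *\<^sub>R u + b *\<^sub>R u') v = a * dform \<alpha> x u v + b * dform \<alpha> x u' v"
proof -
  have L: "linear (frechet_derivative \<alpha> (at x))" by (rule fd_linear[OF assms])
  have "Dir \<alpha> x (a *\<^sub>R u + b *\<^sub>R u') = a *\<^sub>R Dir \<alpha> x u + b *\<^sub>R Dir \<alpha> x u'"
    unfolding Dir_def using L by (simp add: linear_iff)
  then show ?thesis unfolding dform_def by (simp add: inner_add_left inner_add_right algebra_simps)
qed

lemma dform_lin2:
  assumes "\<alpha> differentiable (at x)"
  shows "dform \<alpha> x v (a *\<^sub>R u + b *\<^sub>R u') = a * dform \<alpha> x v u + b * dform \<alpha> x v u'"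
  using dform_lin1[OF assms, of a u b u' v] dform_anti[of \<alpha> x v] by (simp add: algebra_simps)

context adm begin

lemma flat_eq: "y \<in> U \<Longrightarrow> flat gm k y = gm y *v k y"
  unfolding flat_def using symU by simp

lemma sm_flat: "smooth_on U (flat gm k)"
proof -
  have "smooth_on U (\<lambda>y. gm y *v k y)" by (rule smooth_mv[OF openU sm_gm sm_k])
  then show ?thesis by (rule smooth_cong[OF openU, rotated]) (simp add: flat_eq)
qed

lemma diff_flat: "x \<in> U \<Longrightarrow> flat gm k differentiable (at x)"
  using smooth_differentiable[OF sm_flat openU] .

lemma sm_gkk: "smooth_on U (\<lambda>y. gx gm y (k y) (k y))" by (rule smooth_gx[OF openU sm_gm sm_k sm_k])
lemma sm_gkt: "smooth_on U (\<lambda>y. gx gm y (k y) (t y))" by (rule smooth_gx[OF openU sm_gm sm_k sm_t])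

lemma grad_prop:
  assumes x: "x \<in> U" and hd: "h differentiable (at x)"
  shows "gx gm x (grad gm h x) w = frechet_derivative h (at x) w"
proof -
  let ?A = "gm x" and ?d = "\<chi> i. Dir h x (axis i 1)"
  have "gx gm x (grad gm h x) w = (transpose ?A *v grad gm h x) \<bullet> w"
    unfolding gx_def by (simp add: dot_lmul_matrix)
  also have "\<dots> = ((?A ** matrix_inv ?A) *v ?d) \<bullet> w"
    unfolding grad_def using symU[OF x] by (simp add: matrix_vector_mul_assoc)
  also have "\<dots> = ?d \<bullet> w" using matrix_inv_right'[OF invU[OF x]] by simp
  also have "\<dots> = (\<Sum>i\<in>UNIV. w $ i * Dir h x (axis i 1))"
    unfolding inner_vec_def by (simp add: mult.commute)
  also have "\<dots> = frechet_derivative h (at x) w"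
  proof -
    have L: "linear (frechet_derivative h (at x))" by (rule fd_linear[OF hd])
    have "frechet_derivative h (at x) w = frechet_derivative h (at x) (\<Sum>i\<in>UNIV. w $ i *\<^sub>R axis i 1)"
      using basis_expansion[of w] by (simp add: smult_eq)
    also have "\<dots> = (\<Sum>i\<in>UNIV. w $ i * frechet_derivative h (at x) (axis i 1))"
      using L by (simp add: linear_sum linear_scale)
    finally show ?thesis unfolding Dir_def by simp
  qed
  finally show ?thesis .
qed

lemma Vd_H_zero: assumes "x \<in> U" "v \<in> Vd k t x" "w \<in> Hd gm k t x" shows "gx gm x v w = 0"
proof -
  have "gx gm x w v = 0" using assms(2,3) unfolding Hd_def by blast
  then show ?thesis using sym[OF assms(1), of v w] by simp
qed

lemma Dtau_H: assumes x: "x \<in> U" and w: "w \<in> Hd gm k t x" shows "frechet_derivative \<tau> (at x) w = 0"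
proof -
  have d: "\<tau> differentiable (at x)" by (rule smooth_differentiable[OF sm_tau openU x])
  have "gx gm x (t x) w = 0" using Hd_t[OF x w] .
  then have "l x * gx gm x (grad gm \<tau> x) w = 0" using t_grad[OF x] by (simp add: gx_lin)
  moreover have "l x \<noteq> 0" using t_nz[OF x] t_grad[OF x] by auto
  ultimately have "gx gm x (grad gm \<tau> x) w = 0" by simp
  then show ?thesis using grad_prop[OF x d] by simp
qed

lemma Dgkk_H: assumes x: "x \<in> U" and w: "w \<in> Hd gm k t x"
  shows "frechet_derivative (\<lambda>y. gx gm y (k y) (k y)) (at x) w = 0"
  using grad_prop[OF x smooth_differentiable[OF sm_gkk openU x]] Vd_H_zero[OF x grad_kk[OF x] w] by simp

lemma Dgkt_H: assumes x: "x \<in> U" and w: "w \<in> Hd gm k t x"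
  shows "frechet_derivative (\<lambda>y. gx gm y (k y) (t y)) (at x) w = 0"
  using grad_prop[OF x smooth_differentiable[OF sm_gkt openU x]] Vd_H_zero[OF x grad_kt[OF x] w] by simp

lemma sm_G: "smooth_on U (Gfun gm k t)"
proof -
  have "smooth_on U (\<lambda>y. gx gm y (k y) (k y) * gx gm y (t y) (t y) - gx gm y (k y) (t y) * gx gm y (k y) (t y))"
    by (intro smooth_diff[OF openU] smooth_mult[OF openU] smooth_gx[OF openU sm_gm] sm_k sm_t)
  then show ?thesis by (rule smooth_cong[OF openU, rotated]) (simp add: Gfun_def power2_eq_square)
qed

lemma sm_P: "smooth_on U (\<lambda>y. P y w)"
proof -
  have cw: "smooth_on U (\<lambda>y. w)" by (rule smooth_const[OF openU])
  have "smooth_on U (\<lambda>y. ca y w)" unfolding ca_def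
    by (intro smooth_div[OF openU] smooth_diff[OF openU] smooth_mult[OF openU] smooth_gx[OF openU sm_gm] sm_k sm_t cw sm_G Gnz)
  moreover have "smooth_on U (\<lambda>y. cb y w)" unfolding cb_def
    by (intro smooth_div[OF openU] smooth_diff[OF openU] smooth_mult[OF openU] smooth_gx[OF openU sm_gm] sm_k sm_t cw sm_G Gnz)
  ultimately show ?thesis unfolding P_def
    by (intro smooth_diff[OF openU] smooth_scaleR[OF openU] cw sm_k sm_t)
qed

lemma dflat_k_H: assumes x: "x \<in> U" and w: "w \<in> Hd gm k t x"
  shows "dform (flat gm k) x (k x) w = 0 \<and> dform (flat gm k) x (t x) w = 0"
proof -
  define X where "X = (\<lambda>y. P y w)"
  have smX: "smooth_on U X" unfolding X_def by (rule sm_P)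
  have XH: "\<forall>y\<in>U. X y \<in> Hd gm k t y" unfolding X_def using P_H by blast
  have Xx: "X x = w" unfolding X_def by (rule P_id[OF w])
  have dX: "X differentiable (at x)" by (rule smooth_differentiable[OF smX openU x])
  have dF: "flat gm k differentiable (at x)" by (rule diff_flat[OF x])
  have dk: "k differentiable (at x)" by (rule smooth_differentiable[OF sm_k openU x])
  have dt: "t differentiable (at x)" by (rule smooth_differentiable[OF sm_t openU x])
  let ?F = "flat gm k"
  have z: "frechet_derivative (\<lambda>y. ?F y \<bullet> X y) (at x) v = 0" for v
    by (rule fd_zero_open[OF openU x]) (use XH Hd_k in \<open>simp add: flat_inner\<close>)
  have zk: "Dir ?F x (k x) \<bullet> w + ?F x \<bullet> Dir X x (k x) = 0"
    using z[of "k x"] fd_inner[OF dF dX] Xx unfolding Dir_def by simp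
  have zt: "Dir ?F x (t x) \<bullet> w + ?F x \<bullet> Dir X x (t x) = 0"
    using z[of "t x"] fd_inner[OF dF dX] Xx unfolding Dir_def by simp
  have ekk: "(\<lambda>y. gx gm y (k y) (k y)) = (\<lambda>y. ?F y \<bullet> k y)" by (simp add: flat_inner)
  have ekt: "(\<lambda>y. gx gm y (k y) (t y)) = (\<lambda>y. ?F y \<bullet> t y)" by (simp add: flat_inner)
  have kk: "Dir ?F x w \<bullet> k x + ?F x \<bullet> Dir k x w = 0"
    using Dgkk_H[OF x w] fd_inner[OF dF dk] unfolding ekk Dir_def by simp
  have kt: "Dir ?F x w \<bullet> t x + ?F x \<bullet> Dir t x w = 0"
    using Dgkt_H[OF x w] fd_inner[OF dF dt] unfolding ekt Dir_def by simp
  have lie: "lie k X x \<in> Hd gm k t x \<and> lie t X x \<in> Hd gm k t x" by (rule lieH[OF smX XH x])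
  have "dform ?F x (k x) w = - (?F x \<bullet> lie k X x)"
    unfolding dform_def lie_def using zk kk Xx by (simp add: inner_diff_right)
  also have "\<dots> = 0" using lie Hd_k[OF x] by (simp add: flat_inner)
  finally have 1: "dform ?F x (k x) w = 0" .
  have "dform ?F x (t x) w = - (?F x \<bullet> lie t X x)"
    unfolding dform_def lie_def using zt kt Xx by (simp add: inner_diff_right)
  also have "\<dots> = 0" using lie Hd_k[OF x] by (simp add: flat_inner)
  finally show ?thesis using 1 by simp
qed

lemma open_pos_vimage: "open S \<Longrightarrow> continuous_on S h \<Longrightarrow> open {y \<in> S. (h y :: real) > 0}"
proof -
  assume a: "open S" "continuous_on S h"
  have "open (h -` {0<..} \<inter> S)" using a continuous_on_open_vimage[of S h] by auto
  moreover have "h -` {0<..} \<inter> S = {y \<in> S. h y > 0}" by auto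
  ultimately show ?thesis by simp
qed

lemma frame_lie:
  assumes W: "open W" "W \<subseteq> U" "x \<in> W" and s1: "smooth_on W E1" and s2: "smooth_on W E2"
    and pf: "\<forall>y\<in>W. posframe gm k t y (E1 y) (E2 y)"
  shows "gx gm x (k x) (lie E1 E2 x) = - dform (flat gm k) x (E1 x) (E2 x)"
proof -
  let ?F = "flat gm k"
  have x: "x \<in> U" using W by auto
  have H: "E1 y \<in> Hd gm k t y \<and> E2 y \<in> Hd gm k t y" if "y \<in> W" for y
    using pf that unfolding posframe_def by auto
  have dF: "?F differentiable (at x)" by (rule diff_flat[OF x])
  have d1: "E1 differentiable (at x)" by (rule smooth_differentiable[OF s1 W(1,3)])
  have d2: "E2 differentiable (at x)" by (rule smooth_differentiable[OF s2 W(1,3)])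
  have z1: "frechet_derivative (\<lambda>y. ?F y \<bullet> E1 y) (at x) v = 0" for v
    by (rule fd_zero_open[OF W(1,3)]) (use H W(2) Hd_k in \<open>auto simp add: flat_inner\<close>)
  have z2: "frechet_derivative (\<lambda>y. ?F y \<bullet> E2 y) (at x) v = 0" for v
    by (rule fd_zero_open[OF W(1,3)]) (use H W(2) Hd_k in \<open>auto simp add: flat_inner\<close>)
  have a: "Dir ?F x (E1 x) \<bullet> E2 x + ?F x \<bullet> Dir E2 x (E1 x) = 0"
    using z2[of "E1 x"] fd_inner[OF dF d2] unfolding Dir_def by simp
  have b: "Dir ?F x (E2 x) \<bullet> E1 x + ?F x \<bullet> Dir E1 x (E2 x) = 0"
    using z1[of "E2 x"] fd_inner[OF dF d1] unfolding Dir_def by simp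
  have "dform ?F x (E1 x) (E2 x) = - (?F x \<bullet> lie E1 E2 x)"
    unfolding dform_def lie_def using a b by (simp add: inner_diff_right)
  then show ?thesis by (simp add: flat_inner)
qed

lemma dform_frame_inv:
  assumes x: "x \<in> U" and pe: "posframe gm k t x e1 e2" and pf: "posframe gm k t x f1 f2"
  shows "dform (flat gm k) x f1 f2 = dform (flat gm k) x e1 e2"
proof -
  note r = rot[OF x pe pf]
  let ?a = "gx gm x f1 e1" and ?b = "gx gm x f1 e2"
  have dF: "flat gm k differentiable (at x)" by (rule diff_flat[OF x])
  have "dform (flat gm k) x f1 f2 = dform (flat gm k) x (?a *\<^sub>R e1 + ?b *\<^sub>R e2) ((- ?b) *\<^sub>R e1 + ?a *\<^sub>R e2)"
    using r by simp
  also have "\<dots> = ?a * dform (flat gm k) x e1 ((- ?b) *\<^sub>R e1 + ?a *\<^sub>R e2) + ?b * dform (flat gm k) x e2 ((- ?b) *\<^sub>R e1 + ?a *\<^sub>R e2)"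
    by (rule dform_lin1[OF dF])
  also have "dform (flat gm k) x e1 ((- ?b) *\<^sub>R e1 + ?a *\<^sub>R e2) = (- ?b) * dform (flat gm k) x e1 e1 + ?a * dform (flat gm k) x e1 e2"
    by (rule dform_lin2[OF dF])
  also have "dform (flat gm k) x e2 ((- ?b) *\<^sub>R e1 + ?a *\<^sub>R e2) = (- ?b) * dform (flat gm k) x e2 e1 + ?a * dform (flat gm k) x e2 e2"
    by (rule dform_lin2[OF dF])
  also have "?a * ((- ?b) * dform (flat gm k) x e1 e1 + ?a * dform (flat gm k) x e1 e2) + ?b * ((- ?b) * dform (flat gm k) x e2 e1 + ?a * dform (flat gm k) x e2 e2)
      = (?a * ?a + ?b * ?b) * dform (flat gm k) x e1 e2"
    using dform_anti[of "flat gm k" x e2 e1] by (simp add: dform_self algebra_simps)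
  also have "\<dots> = dform (flat gm k) x e1 e2" using r by (simp add: power2_eq_square)
  finally show ?thesis .
qed

lemma local_frame_exists:
  assumes x: "x \<in> U" and pe: "posframe gm k t x e1 e2"
  shows "\<exists>W E1 E2. open W \<and> x \<in> W \<and> W \<subseteq> U \<and> smooth_on W E1 \<and> smooth_on W E2 \<and>
     (\<forall>y\<in>W. posframe gm k t y (E1 y) (E2 y))"
proof -
  have on: "ON x e1 e2" using pe posframe_iff by blast
  note o = ON_facts[OF on x]
  define X1 where "X1 = (\<lambda>y. P y e1)"
  define X2 where "X2 = (\<lambda>y. P y e2)"
  have sX1: "smooth_on U X1" unfolding X1_def by (rule sm_P)
  have sX2: "smooth_on U X2" unfolding X2_def by (rule sm_P)
  have X1H: "y \<in> U \<Longrightarrow> X1 y \<in> Hd gm k t y" for y unfolding X1_def by (rule P_H)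
  have X2H: "y \<in> U \<Longrightarrow> X2 y \<in> Hd gm k t y" for y unfolding X2_def by (rule P_H)
  define n1 where "n1 = (\<lambda>y. gx gm y (X1 y) (X1 y))"
  have sn1: "smooth_on U n1" unfolding n1_def by (rule smooth_gx[OF openU sm_gm sX1 sX1])
  define W0 where "W0 = {y \<in> U. n1 y > 0}"
  have oW0: "open W0" unfolding W0_def by (rule open_pos_vimage[OF openU smooth_cont[OF sn1]])
  have W0U: "W0 \<subseteq> U" unfolding W0_def by auto
  define E1 where "E1 = (\<lambda>y. inverse (sqrt (n1 y)) *\<^sub>R X1 y)"
  have sE1: "smooth_on W0 E1" unfolding E1_def
    by (rule smooth_scaleR[OF oW0 smooth_inv_sqrt[OF oW0 smooth_subset[OF sn1 W0U]] smooth_subset[OF sX1 W0U]])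
       (simp add: W0_def)
  define Y2 where "Y2 = (\<lambda>y. X2 y - gx gm y (X2 y) (E1 y) *\<^sub>R E1 y)"
  have sY2: "smooth_on W0 Y2" unfolding Y2_def
    by (intro smooth_diff[OF oW0] smooth_scaleR[OF oW0] smooth_gx[OF oW0] smooth_subset[OF sm_gm W0U]
        smooth_subset[OF sX2 W0U] sE1)
  define n2 where "n2 = (\<lambda>y. gx gm y (Y2 y) (Y2 y))"
  have sn2: "smooth_on W0 n2" unfolding n2_def by (rule smooth_gx[OF oW0 smooth_subset[OF sm_gm W0U] sY2 sY2])
  define W1 where "W1 = {y \<in> W0. n2 y > 0}"
  have oW1: "open W1" unfolding W1_def by (rule open_pos_vimage[OF oW0 smooth_cont[OF sn2]])
  have W10: "W1 \<subseteq> W0" unfolding W1_def by auto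
  define E2 where "E2 = (\<lambda>y. inverse (sqrt (n2 y)) *\<^sub>R Y2 y)"
  have sE2: "smooth_on W1 E2" unfolding E2_def
    by (rule smooth_scaleR[OF oW1 smooth_inv_sqrt[OF oW1 smooth_subset[OF sn2 W10]] smooth_subset[OF sY2 W10]])
       (simp add: W1_def)
  define dt where "dt = (\<lambda>y. det (vector [k y, t y, E1 y, E2 y] :: real^4^4))"
  have cdt: "continuous_on W1 dt" unfolding dt_def
    using W10 W0U
    by (intro det4_cont smooth_cont smooth_subset[OF sm_k] smooth_subset[OF sm_t] smooth_subset[OF sE1] sE2) auto
  define W where "W = {y \<in> W1. dt y > 0}"
  have oW: "open W" unfolding W_def by (rule open_pos_vimage[OF oW1 cdt])
  have WU: "W \<subseteq> U" and W1': "W \<subseteq> W1" using W10 W0U unfolding W_def by auto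
    have X1x: "X1 x = e1" unfolding X1_def using o by (simp add: P_id)
  have X2x: "X2 x = e2" unfolding X2_def using o by (simp add: P_id)
  have n1x: "n1 x = 1" unfolding n1_def using X1x o by simp
  have E1x: "E1 x = e1" unfolding E1_def using n1x X1x by simp
  have Y2x: "Y2 x = e2" unfolding Y2_def using X2x E1x o by simp
  have n2x: "n2 x = 1" unfolding n2_def using Y2x o by simp
  have E2x: "E2 x = e2" unfolding E2_def using n2x Y2x by simp
  have xW: "x \<in> W" unfolding W_def W1_def W0_def dt_def
    using x n1x n2x E1x E2x pe posframe_iff by simp
    have pfW: "posframe gm k t y (E1 y) (E2 y)" if y: "y \<in> W" for y
  proof -
    have yU: "y \<in> U" using y WU by auto
    have p1: "n1 y > 0" and p2: "n2 y > 0" and pd: "dt y > 0" using y unfolding W_def W1_def W0_def by auto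
    have E1H: "E1 y \<in> Hd gm k t y" unfolding E1_def by (rule Hd_scale[OF X1H[OF yU]])
    have Y2H: "Y2 y \<in> Hd gm k t y" unfolding Y2_def by (intro Hd_diff Hd_scale X2H[OF yU] E1H)
    have E2H: "E2 y \<in> Hd gm k t y" unfolding E2_def by (rule Hd_scale[OF Y2H])
    have E1n: "gx gm y (E1 y) (E1 y) = 1" unfolding E1_def using p1 by (simp add: gx_lin inv_sqrt_sq n1_def)
    have E2n: "gx gm y (E2 y) (E2 y) = 1" unfolding E2_def using p2 by (simp add: gx_lin inv_sqrt_sq n2_def)
    have Y2E1: "gx gm y (E1 y) (Y2 y) = 0" unfolding Y2_def using E1n sym[OF yU, of "X2 y" "E1 y"] by (simp add: gx_lin)
    have E12: "gx gm y (E1 y) (E2 y) = 0" unfolding E2_def using Y2E1 by (simp add: gx_lin)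
    have "ON y (E1 y) (E2 y)" unfolding ON_def using E1H E2H E1n E2n E12 by blast
    then show ?thesis using pd posframe_iff unfolding dt_def by blast
  qed
  show ?thesis
    by (rule exI[of _ W], rule exI[of _ E1], rule exI[of _ E2])
       (use oW xW WU smooth_subset[OF sE1] smooth_subset[OF sE2] W1' W10 pfW in auto)
qed

lemma twist_eq:
  assumes x: "x \<in> U" and pe: "posframe gm k t x e1 e2"
  shows "twist U gm k t k x = - dform (flat gm k) x e1 e2"
  unfolding twist_def
proof (rule the_equality)
  show "\<forall>W E1 E2. open W \<and> x \<in> W \<and> W \<subseteq> U \<and> smooth_on W E1 \<and> smooth_on W E2 \<and>
      (\<forall>y\<in>W. posframe gm k t y (E1 y) (E2 y)) \<longrightarrow>
      gx gm x (k x) (lie E1 E2 x) = - dform (flat gm k) x e1 e2"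
  proof (intro allI impI)
    fix W E1 E2 assume a: "open W \<and> x \<in> W \<and> W \<subseteq> U \<and> smooth_on W E1 \<and> smooth_on W E2 \<and>
      (\<forall>y\<in>W. posframe gm k t y (E1 y) (E2 y))"
    then have "gx gm x (k x) (lie E1 E2 x) = - dform (flat gm k) x (E1 x) (E2 x)"
      using frame_lie by blast
    moreover have "dform (flat gm k) x (E1 x) (E2 x) = dform (flat gm k) x e1 e2"
      using dform_frame_inv[OF x pe] a by blast
    ultimately show "gx gm x (k x) (lie E1 E2 x) = - dform (flat gm k) x e1 e2" by simp
  qed
next
  fix c assume c: "\<forall>W E1 E2. open W \<and> x \<in> W \<and> W \<subseteq> U \<and> smooth_on W E1 \<and> smooth_on W E2 \<and>
      (\<forall>y\<in>W. posframe gm k t y (E1 y) (E2 y)) \<longrightarrow> gx gm x (k x) (lie E1 E2 x) = c"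
  obtain W E1 E2 where a: "open W" "x \<in> W" "W \<subseteq> U" "smooth_on W E1" "smooth_on W E2"
      "\<forall>y\<in>W. posframe gm k t y (E1 y) (E2 y)"
    using local_frame_exists[OF x pe] by blast
  have "c = gx gm x (k x) (lie E1 E2 x)" using c a by blast
  also have "\<dots> = - dform (flat gm k) x (E1 x) (E2 x)" by (rule frame_lie[OF a(1,3,2,4,5,6)])
  also have "\<dots> = - dform (flat gm k) x e1 e2" using dform_frame_inv[OF x pe] a by simp
  finally show "c = - dform (flat gm k) x e1 e2" .
qed

lemma Phi_deriv:
  assumes x: "x \<in> U" and fd: "f differentiable (at (\<tau> x))"
  shows "((\<lambda>y. f (\<tau> y) *\<^sub>R flat gm k y) has_derivative
     (\<lambda>v. f (\<tau> x) *\<^sub>R Dir (flat gm k) x v + (deriv f (\<tau> x) * Dir \<tau> x v) *\<^sub>R flat gm k x)) (at x)"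
proof -
  have df: "(f has_derivative (\<lambda>h. deriv f (\<tau> x) * h)) (at (\<tau> x))"
    using DERIV_deriv_iff_real_differentiable[THEN iffD2, OF fd] unfolding has_field_derivative_def .
  have dtau: "(\<tau> has_derivative Dir \<tau> x) (at x)"
    unfolding Dir_def using smooth_deriv[OF sm_tau openU x] .
  have "((\<lambda>y. f (\<tau> y)) has_derivative (\<lambda>v. deriv f (\<tau> x) * Dir \<tau> x v)) (at x)"
    using diff_chain_at[OF dtau df] by (simp add: o_def)
  moreover have "(flat gm k has_derivative Dir (flat gm k) x) (at x)"
    unfolding Dir_def using smooth_deriv[OF sm_flat openU x] .
  ultimately show ?thesis using has_derivative_scaleR by blast
qed

lemma gK_exp:
  assumes x: "x \<in> U" and fd: "f differentiable (at (\<tau> x))"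
  shows "dform (\<lambda>y. f (\<tau> y) *\<^sub>R flat gm k y) x u v =
     deriv f (\<tau> x) * (Dir \<tau> x u * (flat gm k x \<bullet> v) - Dir \<tau> x v * (flat gm k x \<bullet> u)) + f (\<tau> x) * dform (flat gm k) x u v"
proof -
  have "Dir (\<lambda>y. f (\<tau> y) *\<^sub>R flat gm k y) x = (\<lambda>v. f (\<tau> x) *\<^sub>R Dir (flat gm k) x v + (deriv f (\<tau> x) * Dir \<tau> x v) *\<^sub>R flat gm k x)"
    unfolding Dir_def using Phi_deriv[OF x fd, unfolded Dir_def] by (rule frechet_derivative_at[symmetric])
  then show ?thesis unfolding dform_def by (simp add: inner_add_left algebra_simps)
qed

lemma Phi_diff: "x \<in> U \<Longrightarrow> f differentiable (at (\<tau> x)) \<Longrightarrow> (\<lambda>y. f (\<tau> y) *\<^sub>R flat gm k y) differentiable (at x)"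
  using Phi_deriv differentiableI by blast

end




theorem lemma4p5:
  fixes U :: "vec4 set" and gm :: "vec4 \<Rightarrow> real^4^4" and k t :: "vec4 \<Rightarrow> vec4"
    and l \<tau> :: "vec4 \<Rightarrow> real" and f :: "real \<Rightarrow> real" and S :: "real set"
  assumes "admissible U gm k t l \<tau>"
    and "open S" and "\<tau> ` U \<subseteq> S" and "smooth_on S f"
  shows "\<forall>x\<in>Kregion U gm k t l \<tau> f.
      (\<forall>v\<in>Vd k t x. \<forall>w\<in>Hd gm k t x. gKahler gm k t f \<tau> x v w = 0) \<and>
      gKahler gm k t f \<tau> x (k x) (t x) = 0 \<and>
      gKahler gm k t f \<tau> x (k x) (k x) = gKahler gm k t f \<tau> x (t x) (t x) \<and>
      (\<forall>u\<in>Hd gm k t x. \<forall>w\<in>Hd gm k t x.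
          gKahler gm k t f \<tau> x u w = - f (\<tau> x) * twist U gm k t k x * gx gm x u w)"
proof -
  interpret adm U gm k t l \<tau> by unfold_locales (rule assms(1))
  show ?thesis
  proof
    fix x assume xK: "x \<in> Kregion U gm k t l \<tau> f"
    have x: "x \<in> U" using xK unfolding Kregion_def by auto
    have fd: "f differentiable (at (\<tau> x))"
      using smooth_differentiable[OF assms(4) assms(2)] assms(3) x by auto
    obtain e1 e2 where pe: "posframe gm k t x e1 e2" using posframe_exists[OF x] by blast
    have on: "ON x e1 e2" using pe posframe_iff by blast
    note o = ON_facts[OF on x]
    let ?F = "flat gm k"
    let ?P = "\<lambda>y. f (\<tau> y) *\<^sub>R flat gm k y"
    let ?J = "JL x e1 e2"
    have gK: "gKahler gm k t f \<tau> x u v = dform ?P x u (?J v)" for u v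
      unfolding gKahler_def Jop_eq[OF x pe] ..
    have dP: "?P differentiable (at x)" by (rule Phi_diff[OF x fd])
    have dF: "?F differentiable (at x)" by (rule diff_flat[OF x])
    have tw: "twist U gm k t k x = - dform ?F x e1 e2" by (rule twist_eq[OF x pe])
    have Jk: "?J (k x) = t x" unfolding JL_def using ca_k[OF x] cb_k[OF x] o by simp
    have Jt: "?J (t x) = - k x" unfolding JL_def using ca_t[OF x] cb_t[OF x] o by simp
    have negP: "dform ?P x u (- v) = - dform ?P x u v" for u v
      using dform_lin2[OF dP, of u "-1" v 0 v] by simp
    have HH: "dform ?P x u v = f (\<tau> x) * dform ?F x u v" if "u \<in> Hd gm k t x" "v \<in> Hd gm k t x" for u v
      using gK_exp[OF x fd, of u v] that Hd_k[OF x] by (simp add: flat_inner)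
    have A: "\<forall>v\<in>Vd k t x. \<forall>w\<in>Hd gm k t x. gKahler gm k t f \<tau> x v w = 0"
    proof (intro ballI)
      fix v w assume v: "v \<in> Vd k t x" and w: "w \<in> Hd gm k t x"
      obtain a b where vab: "v = a *\<^sub>R k x + b *\<^sub>R t x" using v Vd_iff by blast
      have Jw: "?J w \<in> Hd gm k t x" by (rule JL_H_in[OF x on w])
      have "dform ?F x v (?J w) = a * dform ?F x (k x) (?J w) + b * dform ?F x (t x) (?J w)"
        unfolding vab by (rule dform_lin1[OF dF])
      also have "\<dots> = 0" using dflat_k_H[OF x Jw] by simp
      finally have d0: "dform ?F x v (?J w) = 0" .
      have "gKahler gm k t f \<tau> x v w = dform ?P x v (?J w)" by (rule gK)
      also have "\<dots> = 0" using gK_exp[OF x fd, of v "?J w"] d0 Dtau_H[OF x Jw] Hd_k[OF x Jw]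
        by (simp add: flat_inner Dir_def)
      finally show "gKahler gm k t f \<tau> x v w = 0" .
    qed
    have B: "gKahler gm k t f \<tau> x (k x) (t x) = 0"
      unfolding gK Jt negP by (simp add: dform_self)
    have C: "gKahler gm k t f \<tau> x (k x) (k x) = gKahler gm k t f \<tau> x (t x) (t x)"
      unfolding gK Jt Jk negP using dform_anti[of ?P x "t x" "k x"] by simp
    have D: "\<forall>u\<in>Hd gm k t x. \<forall>w\<in>Hd gm k t x.
          gKahler gm k t f \<tau> x u w = - f (\<tau> x) * twist U gm k t k x * gx gm x u w"
    proof (intro ballI)
      fix u w assume u: "u \<in> Hd gm k t x" and w: "w \<in> Hd gm k t x"
      define u1 where "u1 = gx gm x u e1"
      define u2 where "u2 = gx gm x u e2"
      define w1 where "w1 = gx gm x w e1"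
      define w2 where "w2 = gx gm x w e2"
      have ue: "u = u1 *\<^sub>R e1 + u2 *\<^sub>R e2" unfolding u1_def u2_def by (rule ON_span[OF x on u])
      have we: "w = w1 *\<^sub>R e1 + w2 *\<^sub>R e2" unfolding w1_def w2_def by (rule ON_span[OF x on w])
      have Jw: "?J w = w1 *\<^sub>R e2 + (- w2) *\<^sub>R e1" unfolding JL_H[OF x on w] w1_def w2_def by simp
      have JwH: "?J w \<in> Hd gm k t x" by (rule JL_H_in[OF x on w])
      let ?\<omega> = "dform ?F x e1 e2"
      have "dform ?F x u (?J w) = u1 * dform ?F x e1 (?J w) + u2 * dform ?F x e2 (?J w)"
        by (subst ue) (rule dform_lin1[OF dF])
      also have "dform ?F x e1 (?J w) = w1 * dform ?F x e1 e2 + (- w2) * dform ?F x e1 e1"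
        unfolding Jw by (rule dform_lin2[OF dF])
      also have "dform ?F x e2 (?J w) = w1 * dform ?F x e2 e2 + (- w2) * dform ?F x e2 e1"
        unfolding Jw by (rule dform_lin2[OF dF])
      finally have d1: "dform ?F x u (?J w) = (u1 * w1 + u2 * w2) * ?\<omega>"
        using dform_anti[of ?F x e2 e1] by (simp add: dform_self algebra_simps)
      have "gx gm x u w = w1 * u1 + w2 * u2"
        by (subst we) (simp add: gx_lin u1_def u2_def)
      then have g: "gx gm x u w = u1 * w1 + u2 * w2" by simp
      have "gKahler gm k t f \<tau> x u w = f (\<tau> x) * dform ?F x u (?J w)"
        unfolding gK by (rule HH[OF u JwH])
      also have "\<dots> = - f (\<tau> x) * twist U gm k t k x * gx gm x u w"
        unfolding d1 tw g by simp
      finally show "gKahler gm k t f \<tau> x u w = - f (\<tau> x) * twist U gm k t k x * gx gm x u w" .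
    qed
    show "(\<forall>v\<in>Vd k t x. \<forall>w\<in>Hd gm k t x. gKahler gm k t f \<tau> x v w = 0) \<and>
      gKahler gm k t f \<tau> x (k x) (t x) = 0 \<and>
      gKahler gm k t f \<tau> x (k x) (k x) = gKahler gm k t f \<tau> x (t x) (t x) \<and>
      (\<forall>u\<in>Hd gm k t x. \<forall>w\<in>Hd gm k t x.
          gKahler gm k t f \<tau> x u w = - f (\<tau> x) * twist U gm k t k x * gx gm x u w)"
      using A B C D by blast
  qed
qed


end
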